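(* Let $X_1,\dots,X_n$ be i.i.d. real random variables whose common distribution is symmetric about $\mu\in\mathbb{R}$ and satisfies $\mathbb{E}\big[|X_1-\mathbb{E}X_1|^{1+a}\big]=M<\infty$ for some $a\in(0,1]$. Let $1\le r\le m$ be integers, $k\le n$ an integer, $\tilde n=\lfloor n/k\rfloor$, let $R(\theta)$ be the one-sided resampled median-of-means rank defined in the context, $\Theta_n=\{\theta: R(\theta)\le m-r\}$ and $U=\sup\Theta_n$. Then $$\mathbb{P}\Big(U-\mu>4\Big(\frac{(12M)^{1/a}}{\tilde n}\Big)^{\frac{a}{1+a}}\Big)\le (m-r)\big(2k\exp(-\tilde n/8)+2\exp(-k/8)\big).$$
   Context: Blocks: for $\ell=1,\dots,k$ let $B_\ell=\{i\in[n]: i\equiv \ell \pmod k\}$. Median: for reals $y_1,\dots,y_k$ with order statistics $y_{(1)}\le\dots\le y_{(k)}$, $\mathrm{med}(y_1,\dots,y_k)=y_{(k/2)}$ if $k$ is even and $y_{(\lfloor k/2\rfloor+1)}$ if $k$ is odd. Median-of-means: $\widehat\mu(x_1,\dots,x_n)=\mathrm{med}\big(\frac{1}{|B_1|}\sum_{i\in B_1}x_i,\dots,\frac{1}{|B_k|}\sum_{i\in B_k}x_i\big)$. Randomization: $\{\alpha_{i,j}\}_{i\in[n],j\in[m-1]}$ i.i.d. Rademacher signs independent of the data; $\pi$ a uniformly random permutation of $\{0,\dots,m-1\}$ independent of data and signs. For $\theta\in\mathbb{R}$: $\mathcal{D}_0(\theta)=(X_1,\dots,X_n)$, $\mathcal{D}_j(\theta)=(\alpha_{1,j}(X_1-\theta)+\theta,\dots,\alpha_{n,j}(X_n-\theta)+\theta)$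 for $j\in[m-1]$ (same signs for all $\theta$); $S_j(\theta)=\widehat\mu(\mathcal{D}_j(\theta))-\theta$ for $j=0,\dots,m-1$. $S_j(\theta)\prec_\pi S_l(\theta)$ iff $S_j(\theta)<S_l(\theta)$, or $S_j(\theta)=S_l(\theta)$ and $\pi(j)<\pi(l)$. $R(\theta)=1+\sum_{j=1}^{m-1}\mathbb{I}\big(S_0(\theta)\prec_\pi S_j(\theta)\big)$. The supremum of the empty set is $-\infty$. *)

theory Defs
  imports "HOL-Probability.Probability" "HOL-Combinatorics.Permutations"
begin

definition block :: "nat \<Rightarrow> nat \<Rightarrow> nat \<Rightarrow> nat set" where
  "block n k l = {i \<in> {1..n}. i mod k = l mod k}"

text \<open>Median: y_(k/2) if k even, y_(floor(k/2)+1) if k odd (order statistics 1-indexed).\<close>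
definition med :: "real list \<Rightarrow> real" where
  "med ys = (let zs = sort ys; k = length ys in
              if even k then zs ! (k div 2 - 1) else zs ! (k div 2))"

definition mom :: "nat \<Rightarrow> nat \<Rightarrow> (nat \<Rightarrow> real) \<Rightarrow> real" where
  "mom n k x = med (map (\<lambda>l. (\<Sum>i\<in>block n k l. x i) / real (card (block n k l))) [1..<k+1])"

definition rdata :: "(nat \<Rightarrow> real) \<Rightarrow> (nat \<Rightarrow> nat \<Rightarrow> real) \<Rightarrow> nat \<Rightarrow> real \<Rightarrow> nat \<Rightarrow> real" where
  "rdata x \<alpha> j \<theta> i = (if j = 0 then x i else \<alpha> i j * (x i - \<theta>) + \<theta>)"

definition Sstat :: "nat \<Rightarrow> nat \<Rightarrow> (nat \<Rightarrow> real) \<Rightarrow> (nat \<Rightarrow> nat \<Rightarrow> real) \<Rightarrow> nat \<Rightarrow> real \<Rightarrow> real" where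
  "Sstat n k x \<alpha> j \<theta> = mom n k (rdata x \<alpha> j \<theta>) - \<theta>"

definition prec_pi :: "(nat \<Rightarrow> nat) \<Rightarrow> (nat \<Rightarrow> real) \<Rightarrow> nat \<Rightarrow> nat \<Rightarrow> bool" where
  "prec_pi \<pi> S j l \<longleftrightarrow> S j < S l \<or> (S j = S l \<and> \<pi> j < \<pi> l)"

definition rank :: "nat \<Rightarrow> nat \<Rightarrow> nat \<Rightarrow> (nat \<Rightarrow> real) \<Rightarrow> (nat \<Rightarrow> nat \<Rightarrow> real) \<Rightarrow> (nat \<Rightarrow> nat) \<Rightarrow> real \<Rightarrow> nat" where
  "rank n k m x \<alpha> \<pi> \<theta> =
     1 + card {j \<in> {1..m-1}. prec_pi \<pi> (\<lambda>j. Sstat n k x \<alpha> j \<theta>) 0 j}"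

definition Theta_set :: "nat \<Rightarrow> nat \<Rightarrow> nat \<Rightarrow> nat \<Rightarrow> (nat \<Rightarrow> real) \<Rightarrow> (nat \<Rightarrow> nat \<Rightarrow> real) \<Rightarrow> (nat \<Rightarrow> nat) \<Rightarrow> real set" where
  "Theta_set n k m r x \<alpha> \<pi> = {\<theta>. rank n k m x \<alpha> \<pi> \<theta> \<le> m - r}"

text \<open>U = sup Theta_n, in the extended reals (sup of the empty set is -infinity).\<close>
definition Uupper :: "nat \<Rightarrow> nat \<Rightarrow> nat \<Rightarrow> nat \<Rightarrow> (nat \<Rightarrow> real) \<Rightarrow> (nat \<Rightarrow> nat \<Rightarrow> real) \<Rightarrow> (nat \<Rightarrow> nat) \<Rightarrow> ereal" where
  "Uupper n k m r x \<alpha> \<pi> = Sup (ereal ` Theta_set n k m r x \<alpha> \<pi>)"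

end

theory Submission
  imports Defs
begin

lemma sorted_count_gt:
  fixes zs :: "real list"
  assumes "sorted zs" "p < length zs" "zs ! p > v"
  shows "length zs - p \<le> length (filter (\<lambda>y. y > v) zs)"
proof -
  have "\<forall>y\<in>set (drop p zs). y > v"
  proof
    fix y assume "y \<in> set (drop p zs)"
    then obtain i where i: "i < length (drop p zs)" "y = drop p zs ! i" by (metis in_set_conv_nth)
    then have "y = zs ! (p + i)" "p + i < length zs" by auto
    moreover have "zs ! p \<le> zs ! (p+i)" using assms(1) \<open>p + i < length zs\<close> by (simp add: sorted_nth_mono)
    ultimately show "y > v" using assms(3) by simp
  qed
  then have "filter (\<lambda>y. y > v) (drop p zs) = drop p zs" by simp
  moreover have "zs = take p zs @ drop p zs" by simp
  then have "length (filter (\<lambda>y. y > v) zs) = length (filter (\<lambda>y. y > v) (take p zs)) + length (filter (\<lambda>y. y > v) (drop p zs))"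
    by (metis filter_append length_append)
  ultimately show ?thesis by simp
qed

lemma sorted_count_le:
  fixes zs :: "real list"
  assumes "sorted zs" "p < length zs" "zs ! p \<le> v"
  shows "p + 1 \<le> length (filter (\<lambda>y. y \<le> v) zs)"
proof -
  have "\<forall>y\<in>set (take (p+1) zs). y \<le> v"
  proof
    fix y assume "y \<in> set (take (p+1) zs)"
    then obtain i where i: "i < length (take (p+1) zs)" "y = take (p+1) zs ! i" by (metis in_set_conv_nth)
    then have "y = zs ! i" "i \<le> p" by auto
    moreover have "zs ! i \<le> zs ! p" using assms(1,2) \<open>i \<le> p\<close> by (simp add: sorted_nth_mono)
    ultimately show "y \<le> v" using assms(3) by simp
  qed
  then have "filter (\<lambda>y. y \<le> v) (take (p+1) zs) = take (p+1) zs" by simp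
  moreover have "zs = take (p+1) zs @ drop (p+1) zs" by simp
  then have "length (filter (\<lambda>y. y \<le> v) zs) = length (filter (\<lambda>y. y \<le> v) (take (p+1) zs)) + length (filter (\<lambda>y. y \<le> v) (drop (p+1) zs))"
    by (metis filter_append length_append)
  ultimately show ?thesis using assms(2) by simp
qed

lemma length_filter_sort: "length (filter P (sort xs)) = length (filter P xs)"
  by (metis filter_sort length_sort)

lemma med_le:
  fixes ys :: "real list"
  assumes "1 \<le> length ys" "2 * length (filter (\<lambda>y. y > v) ys) < length ys"
  shows "med ys \<le> v"
proof (rule ccontr)
  define k where "k = length ys"
  define p where "p = (if even k then k div 2 - 1 else k div 2)"
  have mp: "med ys = sort ys ! p" unfolding med_def p_def k_def Let_def by simp
  have pk: "p < k" using assms(1) unfolding p_def k_def by auto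
  assume "\<not> med ys \<le> v"
  then have "sort ys ! p > v" using mp by simp
  from sorted_count_gt[OF sorted_sort _ this] pk
  have "k - p \<le> length (filter (\<lambda>y. y > v) ys)" by (simp add: k_def length_filter_sort)
  moreover have "k \<le> 2 * (k - p)" unfolding p_def using assms(1) k_def by auto
  ultimately show False using assms(2) k_def by linarith
qed

lemma med_gt:
  fixes ys :: "real list"
  assumes "1 \<le> length ys" "2 * length (filter (\<lambda>y. y \<le> v) ys) < length ys"
  shows "med ys > v"
proof (rule ccontr)
  define k where "k = length ys"
  define p where "p = (if even k then k div 2 - 1 else k div 2)"
  have mp: "med ys = sort ys ! p" unfolding med_def p_def k_def Let_def by simp
  have pk: "p < k" using assms(1) unfolding p_def k_def by auto
  assume "\<not> med ys > v"
  then have "sort ys ! p \<le> v" using mp by simp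
  from sorted_count_le[OF sorted_sort _ this] pk
  have "p + 1 \<le> length (filter (\<lambda>y. y \<le> v) ys)" by (simp add: k_def length_filter_sort)
  moreover have "k \<le> 2 * (p + 1)" unfolding p_def using assms(1) k_def by auto
  moreover note assms(2)
  ultimately show False unfolding k_def
    by (metis add_mult_distrib2 leD le_less_trans mult_le_mono2)
qed

lemma length_filter_map_upt:
  "length (filter P (map f [1..<k+1])) = card {l\<in>{1..k}. P (f l)}"
proof -
  have "length (filter P (map f [1..<k+1])) = length (filter (P \<circ> f) [1..<k+1])"
    by (simp add: filter_map)
  also have "\<dots> = card ({x. (P \<circ> f) x} \<inter> set [1..<k+1])"
    by (rule distinct_length_filter) simp
  also have "{x. (P \<circ> f) x} \<inter> set [1..<k+1] = {l\<in>{1..k}. P (f l)}" by auto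
  finally show ?thesis .
qed

lemma block_sub: "block n k l \<subseteq> {1..n}" unfolding block_def by auto
lemma block_finite: "finite (block n k l)" by (rule finite_subset[OF block_sub]) simp

lemma block_card:
  assumes "1 \<le> k" "l \<in> {1..k}"
  shows "n div k \<le> card (block n k l)"
proof -
  have "(\<lambda>c. c * k + l) ` {0..<n div k} \<subseteq> block n k l"
  proof
    fix x assume "x \<in> (\<lambda>c. c * k + l) ` {0..<n div k}"
    then obtain c where c: "c < n div k" "x = c * k + l" by auto
    have "c+1 \<le> n div k" using c(1) by simp
    then have "(c+1) * k \<le> n div k * k" by (rule mult_le_mono1)
    also have "\<dots> \<le> n" by simp
    finally have "c * k + k \<le> n" by simp
    moreover have "l \<le> k" using assms(2) by simp
    ultimately have "x \<le> n" using c(2) by linarith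
    moreover have "x mod k = l mod k" using c(2) by simp
    moreover have "1 \<le> x" using c(2) assms(2) by simp
    ultimately show "x \<in> block n k l" unfolding block_def by simp
  qed
  moreover have "inj_on (\<lambda>c. c * k + l) {0..<n div k}" using assms(1) by (simp add: inj_on_def)
  ultimately have "card ((\<lambda>c. c * k + l) ` {0..<n div k}) \<le> card (block n k l)"
    using block_finite card_mono by blast
  then show ?thesis using \<open>inj_on _ _\<close> by (simp add: card_image)
qed

lemma block_disj:
  assumes "1 \<le> k" "l \<in> {1..k}" "l' \<in> {1..k}" "l \<noteq> l'"
  shows "block n k l \<inter> block n k l' = {}"
proof -
  have "l mod k \<noteq> l' mod k"
  proof (cases "l = k")
    case True
    then have "l' < k" using assms by simp
    then show ?thesis using True assms(3) by simp
  next
    case False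
    then have "l < k" using assms by simp
    show ?thesis
    proof (cases "l' = k")
      case True then show ?thesis using \<open>l < k\<close> assms by simp
    next
      case False then have "l' < k" using assms by simp
      then show ?thesis using \<open>l < k\<close> assms by simp
    qed
  qed
  then show ?thesis unfolding block_def by auto
qed

lemma (in prob_space) count_hoeffding:
  fixes Z :: "'i \<Rightarrow> 'a \<Rightarrow> real"
  assumes fin: "finite L" and cardL: "card L = k" "1 \<le> k"
    and ind: "indep_vars (\<lambda>_. borel) Z L"
    and val: "\<And>g \<omega>. g \<in> L \<Longrightarrow> \<omega> \<in> space M \<Longrightarrow> Z g \<omega> \<in> {0,1}"
    and pr: "\<And>g. g \<in> L \<Longrightarrow> prob {\<omega>\<in>space M. Z g \<omega> = 1} \<le> 1/4"
  shows "prob {\<omega>\<in>space M. real k \<le> 2 * (\<Sum>g\<in>L. Z g \<omega>)} \<le> exp (- real k / 8)"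
proof -
  have rv: "Z g \<in> borel_measurable M" if "g \<in> L" for g
    using ind that unfolding indep_vars_def by auto
  interpret H: Hoeffding_ineq M L Z "\<lambda>_. 0" "\<lambda>_. 1" "\<Sum>g\<in>L. expectation (Z g)"
  proof unfold_locales
    show "finite L" by fact
    show "indep_vars (\<lambda>_. borel) Z L" by fact
    fix i assume "i \<in> L"
    then show "AE x in M. Z i x \<in> {0..1}" using val by (intro AE_I2) fastforce
  qed simp
  have ex: "expectation (Z g) = prob {\<omega>\<in>space M. Z g \<omega> = 1}" if g: "g \<in> L" for g
  proof -
    have meas: "{\<omega>\<in>space M. Z g \<omega> = 1} \<in> sets M" using rv[OF g] by measurable
    have "expectation (Z g) = expectation (indicator {\<omega>\<in>space M. Z g \<omega> = 1} :: 'a \<Rightarrow> real)"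
      by (rule Bochner_Integration.integral_cong[OF refl]) (use val[OF g] in \<open>fastforce simp: indicator_def\<close>)
    also have "\<dots> = prob {\<omega>\<in>space M. Z g \<omega> = 1}" using meas by simp
    finally show ?thesis .
  qed
  have mu: "(\<Sum>g\<in>L. expectation (Z g)) \<le> real k / 4"
  proof -
    have "(\<Sum>g\<in>L. expectation (Z g)) \<le> (\<Sum>g\<in>L. 1/4)"
      by (rule sum_mono) (use ex pr in auto)
    also have "\<dots> = real k / 4" using cardL by simp
    finally show ?thesis .
  qed
  have sumsq: "(\<Sum>i\<in>L. (1 - 0)\<^sup>2) = (real k :: real)" using cardL by simp
  have "prob {\<omega>\<in>space M. real k \<le> 2 * (\<Sum>g\<in>L. Z g \<omega>)}
        \<le> prob {\<omega>\<in>space M. (\<Sum>g\<in>L. Z g \<omega>) \<ge> (\<Sum>g\<in>L. expectation (Z g)) + real k / 4}"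
    by (rule finite_measure_mono) (use mu rv in \<open>auto\<close>)
  also have "\<dots> \<le> exp (-2 * (real k / 4)\<^sup>2 / (\<Sum>i\<in>L. (1 - 0)\<^sup>2))"
    by (rule H.Hoeffding_ineq_ge) (use cardL sumsq in auto)
  also have "-2 * (real k / 4)\<^sup>2 / (\<Sum>i\<in>L. (1 - 0)\<^sup>2) = - real k / 8"
    using cardL by (simp add: sumsq power2_eq_square)
  finally show ?thesis .
qed

lemma sq_le_powr:
  fixes w L a :: real
  assumes "\<bar>w\<bar> \<le> L" "0 < a" "a \<le> 1"
  shows "w\<^sup>2 \<le> L powr (1 - a) * \<bar>w\<bar> powr (1 + a)"
proof (cases "w = 0")
  case True
  then show ?thesis using assms by simp
next
  case False
  then have wp: "\<bar>w\<bar> > 0" by simp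
  have "w\<^sup>2 = \<bar>w\<bar> powr (1 - a) * \<bar>w\<bar> powr (1 + a)"
    using wp by (simp add: powr_add[symmetric] powr_numeral[symmetric])
  also have "\<dots> \<le> L powr (1 - a) * \<bar>w\<bar> powr (1 + a)"
    by (rule mult_right_mono) (use assms wp in \<open>auto intro: powr_mono2\<close>)
  finally show ?thesis .
qed

lemma (in prob_space) trunc_tail:
  fixes W :: "nat \<Rightarrow> 'a \<Rightarrow> real"
  assumes fin: "finite B" "card B = N" "0 < N"
    and ind: "indep_vars (\<lambda>_. borel) W B"
    and a: "0 < a" "a \<le> 1"
    and intp: "\<And>i. i \<in> B \<Longrightarrow> integrable M (\<lambda>\<omega>. \<bar>W i \<omega>\<bar> powr (1 + a))"
    and mom: "\<And>i. i \<in> B \<Longrightarrow> expectation (\<lambda>\<omega>. \<bar>W i \<omega>\<bar> powr (1 + a)) \<le> Mo"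
    and s: "0 < s"
    and zero: "\<And>i. i \<in> B \<Longrightarrow> expectation (\<lambda>\<omega>. if \<bar>W i \<omega>\<bar> \<le> real N * s then W i \<omega> else 0) = 0"
  shows "prob {\<omega>\<in>space M. real N * s \<le> \<bar>\<Sum>i\<in>B. W i \<omega>\<bar>} \<le> 2 * Mo / (real N powr a * s powr (1 + a))"
proof -
  define L where "L = real N * s"
  have L: "0 < L" using fin s by (simp add: L_def)
  define T where "T i \<omega> = (if \<bar>W i \<omega>\<bar> \<le> L then W i \<omega> else 0)" for i \<omega>
  have rvW[measurable]: "W i \<in> borel_measurable M" if "i \<in> B" for i
    using ind that unfolding indep_vars_def by auto
  have rvT[measurable]: "T i \<in> borel_measurable M" if "i \<in> B" for i
    unfolding T_def using that by measurable
  have Tb: "\<bar>T i \<omega>\<bar> \<le> L" for i \<omega> unfolding T_def using L by auto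
  have intT: "integrable M (T i)" if "i \<in> B" for i
    by (rule integrable_const_bound[where B=L]) (use Tb that in auto)
  have intTT: "integrable M (\<lambda>\<omega>. T i \<omega> * T j \<omega>)" if "i \<in> B" "j \<in> B" for i j
  proof (rule integrable_const_bound[where B="L*L"])
    show "AE x in M. norm (T i x * T j x) \<le> L * L"
      using Tb by (intro AE_I2) (simp add: abs_mult mult_mono L less_imp_le)
  qed (use that in auto)
  have ET: "expectation (T i) = 0" if "i \<in> B" for i
    using zero[OF that] unfolding T_def L_def .
  have indT: "indep_vars (\<lambda>_. borel) T B"
    unfolding T_def by (rule indep_vars_compose2[OF ind, where Y="\<lambda>i w. if \<bar>w\<bar> \<le> L then w else 0"]) measurable
  have off: "expectation (\<lambda>\<omega>. T i \<omega> * T j \<omega>) = 0" if "i \<in> B" "j \<in> B" "i \<noteq> j" for i j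
  proof -
    have "expectation (\<lambda>\<omega>. \<Prod>l\<in>{i,j}. T l \<omega>) = (\<Prod>l\<in>{i,j}. expectation (T l))"
      by (rule indep_vars_lebesgue_integral) (use that intT in \<open>auto intro: indep_vars_subset[OF indT]\<close>)
    then show ?thesis using that ET by simp
  qed
  have diag: "expectation (\<lambda>\<omega>. T i \<omega> * T i \<omega>) \<le> L powr (1 - a) * Mo" if "i \<in> B" for i
  proof -
    have "expectation (\<lambda>\<omega>. T i \<omega> * T i \<omega>) \<le> expectation (\<lambda>\<omega>. L powr (1 - a) * \<bar>W i \<omega>\<bar> powr (1 + a))"
    proof (rule integral_mono)
      show "integrable M (\<lambda>\<omega>. T i \<omega> * T i \<omega>)" using intTT that by auto
      show "integrable M (\<lambda>\<omega>. L powr (1 - a) * \<bar>W i \<omega>\<bar> powr (1 + a))" using intp that by auto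
      fix \<omega> show "T i \<omega> * T i \<omega> \<le> L powr (1 - a) * \<bar>W i \<omega>\<bar> powr (1 + a)"
        using sq_le_powr[OF _ a, of "T i \<omega>" L] unfolding T_def
        by (auto simp: power2_eq_square intro: mult_nonneg_nonneg)
    qed
    also have "\<dots> = L powr (1 - a) * expectation (\<lambda>\<omega>. \<bar>W i \<omega>\<bar> powr (1 + a))" by simp
    also have "\<dots> \<le> L powr (1 - a) * Mo" using mom[OF that] by (intro mult_left_mono) auto
    finally show ?thesis .
  qed
  have sq: "(\<Sum>i\<in>B. T i \<omega>)\<^sup>2 = (\<Sum>i\<in>B. \<Sum>j\<in>B. T i \<omega> * T j \<omega>)" for \<omega>
    by (simp add: power2_eq_square sum_product)
  have intsq: "integrable M (\<lambda>\<omega>. (\<Sum>i\<in>B. T i \<omega>)\<^sup>2)"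
    unfolding sq by (auto intro!: integrable_sum intTT)
  have E2: "expectation (\<lambda>\<omega>. (\<Sum>i\<in>B. T i \<omega>)\<^sup>2) \<le> real N * (L powr (1 - a) * Mo)"
  proof -
    have "expectation (\<lambda>\<omega>. (\<Sum>i\<in>B. T i \<omega>)\<^sup>2) = (\<Sum>i\<in>B. \<Sum>j\<in>B. expectation (\<lambda>\<omega>. T i \<omega> * T j \<omega>))"
      unfolding sq by (simp add: integral_sum intTT integrable_sum)
    also have "\<dots> = (\<Sum>i\<in>B. expectation (\<lambda>\<omega>. T i \<omega> * T i \<omega>))"
    proof (rule sum.cong[OF refl])
      fix i assume i: "i \<in> B"
      have "(\<Sum>j\<in>B. expectation (\<lambda>\<omega>. T i \<omega> * T j \<omega>)) =
            expectation (\<lambda>\<omega>. T i \<omega> * T i \<omega>) + (\<Sum>j\<in>B-{i}. expectation (\<lambda>\<omega>. T i \<omega> * T j \<omega>))"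
        using i fin by (simp add: sum.remove)
      also have "(\<Sum>j\<in>B-{i}. expectation (\<lambda>\<omega>. T i \<omega> * T j \<omega>)) = 0"
        using off i by (intro sum.neutral) auto
      finally show "(\<Sum>j\<in>B. expectation (\<lambda>\<omega>. T i \<omega> * T j \<omega>)) = expectation (\<lambda>\<omega>. T i \<omega> * T i \<omega>)" by simp
    qed
    also have "\<dots> \<le> (\<Sum>i\<in>B. L powr (1 - a) * Mo)" by (rule sum_mono) (use diag in auto)
    also have "\<dots> = real N * (L powr (1 - a) * Mo)" using fin by simp
    finally show ?thesis .
  qed
  have P2: "prob {\<omega>\<in>space M. \<bar>\<Sum>i\<in>B. T i \<omega>\<bar> \<ge> L} \<le> real N * (L powr (1 - a) * Mo) / L\<^sup>2"
  proof -
    have "prob {\<omega>\<in>space M. \<bar>\<Sum>i\<in>B. T i \<omega>\<bar> \<ge> L} \<le> expectation (\<lambda>\<omega>. (\<Sum>i\<in>B. T i \<omega>)\<^sup>2) / L\<^sup>2"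
      by (rule second_moment_method) (use L intsq in auto)
    also have "\<dots> \<le> real N * (L powr (1 - a) * Mo) / L\<^sup>2"
      using E2 L by (intro divide_right_mono) auto
    finally show ?thesis .
  qed
  have P1: "prob {\<omega>\<in>space M. \<bar>W i \<omega>\<bar> powr (1 + a) \<ge> L powr (1 + a)} \<le> Mo / L powr (1 + a)" if i: "i \<in> B" for i
  proof -
    have "prob {\<omega>\<in>space M. \<bar>W i \<omega>\<bar> powr (1 + a) \<ge> L powr (1 + a)} \<le> expectation (\<lambda>\<omega>. \<bar>W i \<omega>\<bar> powr (1 + a)) / L powr (1 + a)"
      by (rule integral_Markov_inequality_measure[where A="space M"]) (use intp[OF i] L in auto)
    also have "\<dots> \<le> Mo / L powr (1 + a)" using mom[OF i] L by (intro divide_right_mono) auto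
    finally show ?thesis .
  qed
  have sub: "{\<omega>\<in>space M. L \<le> \<bar>\<Sum>i\<in>B. W i \<omega>\<bar>} \<subseteq>
      (\<Union>i\<in>B. {\<omega>\<in>space M. \<bar>W i \<omega>\<bar> powr (1 + a) \<ge> L powr (1 + a)}) \<union> {\<omega>\<in>space M. \<bar>\<Sum>i\<in>B. T i \<omega>\<bar> \<ge> L}"
  proof
    fix \<omega> assume w: "\<omega> \<in> {\<omega>\<in>space M. L \<le> \<bar>\<Sum>i\<in>B. W i \<omega>\<bar>}"
    show "\<omega> \<in> (\<Union>i\<in>B. {\<omega>\<in>space M. \<bar>W i \<omega>\<bar> powr (1 + a) \<ge> L powr (1 + a)}) \<union> {\<omega>\<in>space M. \<bar>\<Sum>i\<in>B. T i \<omega>\<bar> \<ge> L}"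
    proof (cases "\<forall>i\<in>B. \<bar>W i \<omega>\<bar> \<le> L")
      case True
      then have "(\<Sum>i\<in>B. T i \<omega>) = (\<Sum>i\<in>B. W i \<omega>)" unfolding T_def by (intro sum.cong) auto
      then show ?thesis using w by auto
    next
      case False
      then obtain i where i: "i \<in> B" "\<bar>W i \<omega>\<bar> > L" by auto
      then have "\<bar>W i \<omega>\<bar> powr (1 + a) \<ge> L powr (1 + a)" using L a by (intro powr_mono2) auto
      then show ?thesis using w i by auto
    qed
  qed
  have "prob {\<omega>\<in>space M. L \<le> \<bar>\<Sum>i\<in>B. W i \<omega>\<bar>} \<le>
        prob ((\<Union>i\<in>B. {\<omega>\<in>space M. \<bar>W i \<omega>\<bar> powr (1 + a) \<ge> L powr (1 + a)}) \<union> {\<omega>\<in>space M. \<bar>\<Sum>i\<in>B. T i \<omega>\<bar> \<ge> L})"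
    by (rule finite_measure_mono[OF sub]) (use fin in auto)
  also have "\<dots> \<le> prob (\<Union>i\<in>B. {\<omega>\<in>space M. \<bar>W i \<omega>\<bar> powr (1 + a) \<ge> L powr (1 + a)}) + prob {\<omega>\<in>space M. \<bar>\<Sum>i\<in>B. T i \<omega>\<bar> \<ge> L}"
    by (rule measure_Un_le) (use fin in auto)
  also have "prob (\<Union>i\<in>B. {\<omega>\<in>space M. \<bar>W i \<omega>\<bar> powr (1 + a) \<ge> L powr (1 + a)}) \<le>
      (\<Sum>i\<in>B. prob {\<omega>\<in>space M. \<bar>W i \<omega>\<bar> powr (1 + a) \<ge> L powr (1 + a)})"
    by (rule measure_UNION_le) (use fin in auto)
  also have "\<dots> \<le> (\<Sum>i\<in>B. Mo / L powr (1 + a))" by (rule sum_mono) (use P1 in auto)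
  also have "\<dots> = real N * (Mo / L powr (1 + a))" using fin by simp
  finally have "prob {\<omega>\<in>space M. L \<le> \<bar>\<Sum>i\<in>B. W i \<omega>\<bar>} \<le>
       real N * (Mo / L powr (1 + a)) + real N * (L powr (1 - a) * Mo) / L\<^sup>2"
    using P2 by linarith
  also have "real N * (L powr (1 - a) * Mo) / L\<^sup>2 = real N * (Mo / L powr (1 + a))"
  proof -
    have "L powr (1 - a) / L\<^sup>2 = L powr (1 - a) / L powr 2" using L by (simp add: powr_numeral)
    also have "\<dots> = L powr ((1 - a) - 2)" by (simp only: powr_diff)
    also have "(1 - a) - 2 = - (1 + a)" by simp
    also have "L powr (- (1 + a)) = 1 / L powr (1 + a)" by (simp only: powr_minus divide_inverse mult_1)
    finally have "L powr (1 - a) / L\<^sup>2 = 1 / L powr (1 + a)" .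
    have "real N * (L powr (1 - a) * Mo) / L\<^sup>2 = real N * Mo * (L powr (1 - a) / L\<^sup>2)"
      by (simp add: ac_simps)
    also have "\<dots> = real N * (Mo / L powr (1 + a))" unfolding \<open>L powr (1 - a) / L\<^sup>2 = 1 / L powr (1 + a)\<close> by simp
    finally show ?thesis .
  qed
  also have "real N * (Mo / L powr (1 + a)) + real N * (Mo / L powr (1 + a)) = 2 * Mo / (real N powr a * s powr (1 + a))"
  proof -
    have "L powr (1 + a) = real N * (real N powr a * s powr (1 + a))"
      unfolding L_def using fin s by (simp add: powr_mult powr_add)
    then show ?thesis using fin s by (simp add: field_simps)
  qed
  finally show ?thesis unfolding L_def .
qed

lemma (in prob_space) block_tail:
  fixes W :: "nat \<Rightarrow> 'a \<Rightarrow> real"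
  assumes fin: "finite B" "card B = N" "0 < N"
    and ind: "indep_vars (\<lambda>_. borel) W B"
    and a: "0 < a" "a \<le> 1"
    and intp: "\<And>i. i \<in> B \<Longrightarrow> integrable M (\<lambda>\<omega>. \<bar>W i \<omega>\<bar> powr (1 + a))"
    and mom: "\<And>i. i \<in> B \<Longrightarrow> expectation (\<lambda>\<omega>. \<bar>W i \<omega>\<bar> powr (1 + a)) \<le> Mo"
    and s: "0 \<le> s" and sMo: "12 * Mo \<le> real N powr a * s powr (1 + a)"
    and zero: "\<And>i. i \<in> B \<Longrightarrow> expectation (\<lambda>\<omega>. if \<bar>W i \<omega>\<bar> \<le> real N * s then W i \<omega> else 0) = 0"
  shows "prob {\<omega>\<in>space M. real N * s < \<bar>\<Sum>i\<in>B. W i \<omega>\<bar>} \<le> 1 / 6"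
proof (cases "s = 0")
  case False
  then have sp: "0 < s" using s by simp
  have D: "0 < real N powr a * s powr (1 + a)" using sp fin by simp
  have "prob {\<omega>\<in>space M. real N * s < \<bar>\<Sum>i\<in>B. W i \<omega>\<bar>} \<le> prob {\<omega>\<in>space M. real N * s \<le> \<bar>\<Sum>i\<in>B. W i \<omega>\<bar>}"
  proof (rule finite_measure_mono)
    have [measurable]: "W i \<in> borel_measurable M" if "i \<in> B" for i
      using ind that unfolding indep_vars_def by auto
    show "{\<omega>\<in>space M. real N * s \<le> \<bar>\<Sum>i\<in>B. W i \<omega>\<bar>} \<in> sets M" by measurable
  qed auto
  also have "\<dots> \<le> 2 * Mo / (real N powr a * s powr (1 + a))"
    by (rule trunc_tail[OF fin ind a intp mom sp zero]) auto
  also have "\<dots> \<le> 1 / 6"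
    using D sMo by (simp add: divide_simps)
  finally show ?thesis .
next
  case True
  have "AE \<omega> in M. \<bar>W i \<omega>\<bar> powr (1 + a) = 0" if i: "i \<in> B" for i
  proof -
    have "expectation (\<lambda>\<omega>. \<bar>W i \<omega>\<bar> powr (1 + a)) \<le> 0" using mom[OF i] sMo True a by simp
    moreover have "expectation (\<lambda>\<omega>. \<bar>W i \<omega>\<bar> powr (1 + a)) \<ge> 0" by simp
    ultimately have "expectation (\<lambda>\<omega>. \<bar>W i \<omega>\<bar> powr (1 + a)) = 0" by simp
    then show ?thesis using integral_nonneg_eq_0_iff_AE[OF intp[OF i]] by simp
  qed
  then have "AE \<omega> in M. \<forall>i\<in>B. \<bar>W i \<omega>\<bar> powr (1 + a) = 0"
    by (intro eventually_ball_finite fin) auto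
  then have "AE \<omega> in M. \<not> (real N * s < \<bar>\<Sum>i\<in>B. W i \<omega>\<bar>)"
    by eventually_elim (use True in simp)
  then have "prob {\<omega>\<in>space M. real N * s < \<bar>\<Sum>i\<in>B. W i \<omega>\<bar>} = 0" by (rule prob_eq_0_AE)
  then show ?thesis by simp
qed

lemma card_as_sum:
  assumes "finite S"
  shows "(\<Sum>l\<in>S. if P l then 1 else 0 :: real) = real (card {l\<in>S. P l})"
proof -
  have "(\<Sum>l\<in>S. if P l then 1 else 0 :: real) = (\<Sum>l\<in>{l\<in>S. P l}. 1)"
    using assms by (simp add: sum.If_cases Int_def conj_commute)
  then show ?thesis by simp
qed

lemma block_avg_eq:
  fixes x :: "nat \<Rightarrow> real"
  assumes "finite B" "card B > 0"
  shows "((\<Sum>i\<in>B. x i) / real (card B) > c) \<longleftrightarrow> (\<Sum>i\<in>B. x i - c) > 0"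
    and "((\<Sum>i\<in>B. x i) / real (card B) \<le> c) \<longleftrightarrow> (\<Sum>i\<in>B. x i - c) \<le> 0"
proof -
  have e: "(\<Sum>i\<in>B. x i - c) = (\<Sum>i\<in>B. x i) - real (card B) * c"
    by (simp add: sum_subtractf)
  have p: "real (card B) > 0" using assms by simp
  show "((\<Sum>i\<in>B. x i) / real (card B) > c) \<longleftrightarrow> (\<Sum>i\<in>B. x i - c) > 0"
    unfolding e using p by (simp add: field_simps)
  show "((\<Sum>i\<in>B. x i) / real (card B) \<le> c) \<longleftrightarrow> (\<Sum>i\<in>B. x i - c) \<le> 0"
    unfolding e using p by (simp add: field_simps)
qed

lemma cnt_helper:
  fixes S :: real
  assumes "real c = S" "\<not> real k \<le> 2 * S" "length xs = k"
  shows "2 * c < length xs"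
proof -
  have "real (2 * c) < real k" using assms(1,2) by simp
  then show ?thesis using assms(3) by linarith
qed

lemma key_det:
  fixes x :: "nat \<Rightarrow> real" and al :: "nat \<Rightarrow> nat \<Rightarrow> real"
  assumes k: "1 \<le> k" "k \<le> n" and s: "0 \<le> s" and j: "1 \<le> j"
    and h0: "\<not> real k \<le> 2 * (\<Sum>l\<in>{1..k}. if real (card (block n k l)) * s < (\<Sum>i\<in>block n k l. x i - \<mu>) then 1 else 0)"
    and h1: "\<forall>l\<in>{1..k}. \<not> real (card (block n k l)) < 2 * (\<Sum>i\<in>block n k l. al i j)"
    and h2: "\<not> real k \<le> 2 * (\<Sum>l\<in>{1..k}. if (\<Sum>i\<in>block n k l. al i j * (x i - \<mu>)) < - (real (card (block n k l)) * s) then 1 else 0)"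
    and th: "\<mu> + 4 * s < \<theta>"
  shows "Sstat n k x al 0 \<theta> < Sstat n k x al j \<theta>"
proof -
  have Npos: "0 < card (block n k l)" if "l \<in> {1..k}" for l
  proof -
    have "k div k \<le> n div k" using k(2) by (rule div_le_mono)
    then have "1 \<le> n div k" using k(1) by simp
    then show ?thesis using block_card[OF k(1) that, of n] by linarith
  qed
  define f where "f l = (\<Sum>i\<in>block n k l. x i) / real (card (block n k l))" for l
  have m0: "mom n k x = med (map f [1..<k+1])" unfolding mom_def f_def ..
  have mx: "mom n k x \<le> \<mu> + s"
    unfolding m0
  proof (rule med_le)
    show "1 \<le> length (map f [1..<k + 1])" using k by simp
    have "length (filter (\<lambda>y. y > \<mu> + s) (map f [1..<k + 1])) = card {l\<in>{1..k}. f l > \<mu> + s}"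
      by (rule length_filter_map_upt)
    also have "{l\<in>{1..k}. f l > \<mu> + s} = {l\<in>{1..k}. real (card (block n k l)) * s < (\<Sum>i\<in>block n k l. x i - \<mu>)}"
    proof (rule Collect_cong)
      fix l
      show "(l \<in> {1..k} \<and> \<mu> + s < f l) = (l \<in> {1..k} \<and> real (card (block n k l)) * s < (\<Sum>i\<in>block n k l. x i - \<mu>))"
      proof (cases "l \<in> {1..k}")
        case True
        have "(\<mu> + s < f l) \<longleftrightarrow> (\<Sum>i\<in>block n k l. x i - (\<mu> + s)) > 0"
          unfolding f_def by (rule block_avg_eq(1)[OF block_finite Npos[OF True]])
        also have "(\<Sum>i\<in>block n k l. x i - (\<mu> + s)) = (\<Sum>i\<in>block n k l. x i - \<mu>) - real (card (block n k l)) * s"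
          by (simp add: sum_subtractf algebra_simps)
        finally show ?thesis using True by auto
      qed auto
    qed
    finally have "real (length (filter (\<lambda>y. y > \<mu> + s) (map f [1..<k + 1]))) =
       (\<Sum>l\<in>{1..k}. if real (card (block n k l)) * s < (\<Sum>i\<in>block n k l. x i - \<mu>) then 1 else 0)"
      by (simp add: card_as_sum)
    then show "2 * length (filter (\<lambda>y. y > \<mu> + s) (map f [1..<k + 1])) < length (map f [1..<k + 1])"
      by (rule cnt_helper[OF _ h0]) simp
  qed
  define \<delta> where "\<delta> = \<theta> - \<mu>"
  have dl: "4 * s < \<delta>" using th unfolding \<delta>_def by simp
  define g where "g l = (\<Sum>i\<in>block n k l. rdata x al j \<theta> i) / real (card (block n k l))" for l
  have mj: "mom n k (rdata x al j \<theta>) = med (map g [1..<k+1])" unfolding mom_def g_def ..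
  have "mom n k (rdata x al j \<theta>) > \<mu> + s"
    unfolding mj
  proof (rule med_gt)
    show "1 \<le> length (map g [1..<k + 1])" using k by simp
    have "length (filter (\<lambda>y. y \<le> \<mu> + s) (map g [1..<k + 1])) = card {l\<in>{1..k}. g l \<le> \<mu> + s}"
      by (rule length_filter_map_upt)
    also have "\<dots> \<le> card {l\<in>{1..k}. (\<Sum>i\<in>block n k l. al i j * (x i - \<mu>)) < - (real (card (block n k l)) * s)}"
    proof (rule card_mono)
      show "finite {l\<in>{1..k}. (\<Sum>i\<in>block n k l. al i j * (x i - \<mu>)) < - (real (card (block n k l)) * s)}" by simp
      show "{l\<in>{1..k}. g l \<le> \<mu> + s} \<subseteq> {l\<in>{1..k}. (\<Sum>i\<in>block n k l. al i j * (x i - \<mu>)) < - (real (card (block n k l)) * s)}"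
      proof safe
        fix l assume l: "l \<in> {1..k}" "g l \<le> \<mu> + s"
        define N where "N = real (card (block n k l))"
        have N: "0 < N" using Npos[OF l(1)] unfolding N_def by simp
        define SA where "SA = (\<Sum>i\<in>block n k l. al i j)"
        define SW where "SW = (\<Sum>i\<in>block n k l. al i j * (x i - \<mu>))"
        have "(\<Sum>i\<in>block n k l. rdata x al j \<theta> i - (\<mu> + s)) \<le> 0"
          using l(2) unfolding g_def by (subst (asm) block_avg_eq(2)[OF block_finite Npos[OF l(1)]])
        moreover have "(\<Sum>i\<in>block n k l. rdata x al j \<theta> i - (\<mu> + s)) = SW - \<delta> * SA + N * (\<delta> - s)"
        proof -
          have "(\<Sum>i\<in>block n k l. rdata x al j \<theta> i - (\<mu> + s)) =
                (\<Sum>i\<in>block n k l. al i j * (x i - \<mu>) - \<delta> * al i j + (\<delta> - s))"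
            using j by (intro sum.cong) (auto simp: rdata_def \<delta>_def algebra_simps)
          also have "\<dots> = SW - \<delta> * SA + N * (\<delta> - s)"
            unfolding SW_def SA_def N_def by (simp add: sum.distrib sum_subtractf sum_distrib_left)
          finally show ?thesis .
        qed
        moreover have "2 * SA \<le> N" using h1 l(1) unfolding SA_def N_def by (simp add: not_less)
        moreover have "\<delta> > 0" using dl s by simp
        ultimately have "SW \<le> \<delta> * SA - N * (\<delta> - s)" "\<delta> * (2 * SA) \<le> \<delta> * N"
          by (auto intro: mult_left_mono)
        moreover have "N * (4 * s) < N * \<delta>" using N dl by simp
        ultimately have "SW < - (N * s)" by (simp add: algebra_simps)
        then show "(\<Sum>i\<in>block n k l. al i j * (x i - \<mu>)) < - (real (card (block n k l)) * s)"
          unfolding SW_def N_def .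
      qed
    qed
    finally have le: "length (filter (\<lambda>y. y \<le> \<mu> + s) (map g [1..<k + 1])) \<le>
      card {l\<in>{1..k}. (\<Sum>i\<in>block n k l. al i j * (x i - \<mu>)) < - (real (card (block n k l)) * s)}" .
    have "real (card {l\<in>{1..k}. (\<Sum>i\<in>block n k l. al i j * (x i - \<mu>)) < - (real (card (block n k l)) * s)}) =
       (\<Sum>l\<in>{1..k}. if (\<Sum>i\<in>block n k l. al i j * (x i - \<mu>)) < - (real (card (block n k l)) * s) then 1 else 0)"
      by (simp add: card_as_sum)
    then have "2 * card {l\<in>{1..k}. (\<Sum>i\<in>block n k l. al i j * (x i - \<mu>)) < - (real (card (block n k l)) * s)} < k"
      using h2 by linarith
    then show "2 * length (filter (\<lambda>y. y \<le> \<mu> + s) (map g [1..<k + 1])) < length (map g [1..<k + 1])"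
      using le by simp
  qed
  moreover have "rdata x al 0 \<theta> = x" by (simp add: rdata_def fun_eq_iff)
  ultimately show ?thesis unfolding Sstat_def using mx by simp
qed

lemma (in prob_space) indep_groups:
  fixes F :: "'t \<Rightarrow> 'a \<Rightarrow> real" and Z :: "'g \<Rightarrow> 'a \<Rightarrow> real"
  assumes ind: "indep_vars (\<lambda>_. borel) F I" and K: "\<And>g. g \<in> G \<Longrightarrow> K g \<subseteq> I"
    and disj: "disjoint_family_on K G"
    and h: "\<And>g. g \<in> G \<Longrightarrow> h g \<in> borel_measurable (PiM (K g) (\<lambda>_. borel))"
    and Z: "\<And>g \<omega>. g \<in> G \<Longrightarrow> Z g \<omega> = h g (restrict (\<lambda>t. F t \<omega>) (K g))"
  shows "indep_vars (\<lambda>_. borel) Z G"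
proof -
  have "indep_vars (\<lambda>j. PiM (K j) (\<lambda>_. borel)) (\<lambda>j \<omega>. restrict (\<lambda>i. F i \<omega>) (K j)) G"
    by (rule indep_vars_restrict[OF ind K disj])
  then have "indep_vars (\<lambda>_. borel) (\<lambda>g \<omega>. h g (restrict (\<lambda>i. F i \<omega>) (K g))) G"
    by (rule indep_vars_compose2) (rule h)
  then show ?thesis
    by (rule indep_vars_cong[THEN iffD1, rotated 3]) (auto simp: Z fun_eq_iff)
qed

locale setting = prob_space M for M :: "'w measure" +
  fixes X :: "nat \<Rightarrow> 'w \<Rightarrow> real" and \<alpha> :: "nat \<Rightarrow> nat \<Rightarrow> 'w \<Rightarrow> real"
    and n m :: nat and \<mu> a Mom :: real
  assumes a: "0 < a" "a \<le> 1"
    and indep: "indep_vars (\<lambda>_. borel) (\<lambda>t. case t of Inl i \<Rightarrow> X i | Inr (i, j) \<Rightarrow> \<alpha> i j)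
                  ({1..n} <+> ({1..n} \<times> {1..m-1}))"
    and ident: "\<And>i. i \<in> {1..n} \<Longrightarrow> distr M borel (X i) = distr M borel (X 1)"
    and symm: "distr M borel (\<lambda>\<omega>. X 1 \<omega> - \<mu>) = distr M borel (\<lambda>\<omega>. \<mu> - X 1 \<omega>)"
    and int1: "integrable M (X 1)"
    and intm: "integrable M (\<lambda>\<omega>. \<bar>X 1 \<omega> - expectation (X 1)\<bar> powr (1 + a))"
    and mom_eq: "expectation (\<lambda>\<omega>. \<bar>X 1 \<omega> - expectation (X 1)\<bar> powr (1 + a)) = Mom"
    and rad_val: "\<And>i j \<omega>. i \<in> {1..n} \<Longrightarrow> j \<in> {1..m-1} \<Longrightarrow> \<omega> \<in> space M \<Longrightarrow> \<alpha> i j \<omega> \<in> {-1, 1}"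
    and rad_prob: "\<And>i j. i \<in> {1..n} \<Longrightarrow> j \<in> {1..m-1} \<Longrightarrow> prob {\<omega> \<in> space M. \<alpha> i j \<omega> = 1} = 1 / 2"
begin

abbreviation "II \<equiv> ({1..n} <+> ({1..n} \<times> {1..m-1}))"
abbreviation "FF \<equiv> (\<lambda>t. case t of Inl i \<Rightarrow> X i | Inr (i, j) \<Rightarrow> \<alpha> i j)"

lemma rvX[measurable]: "i \<in> {1..n} \<Longrightarrow> X i \<in> borel_measurable M"
  using indep unfolding indep_vars_def by (metis (no_types, lifting) InlI sum.case(1))

lemma rvA[measurable]: "i \<in> {1..n} \<Longrightarrow> j \<in> {1..m-1} \<Longrightarrow> \<alpha> i j \<in> borel_measurable M"
proof -
  assume "i \<in> {1..n}" "j \<in> {1..m-1}"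
  then have "Inr (i, j) \<in> II" by auto
  then have "FF (Inr (i, j)) \<in> borel_measurable M" using indep unfolding indep_vars_def by blast
  then show ?thesis by simp
qed

lemma rvX1[measurable]: "X 1 \<in> borel_measurable M" using int1 by auto

lemma EX1: "expectation (X 1) = \<mu>"
proof -
  have d1: "integral\<^sup>L (distr M borel (\<lambda>\<omega>. X 1 \<omega> - \<mu>)) (\<lambda>y. y) = expectation (\<lambda>\<omega>. X 1 \<omega> - \<mu>)"
    by (rule integral_distr) measurable
  have d2: "integral\<^sup>L (distr M borel (\<lambda>\<omega>. \<mu> - X 1 \<omega>)) (\<lambda>y. y) = expectation (\<lambda>\<omega>. \<mu> - X 1 \<omega>)"
    by (rule integral_distr) measurable
  have "expectation (\<lambda>\<omega>. X 1 \<omega> - \<mu>) = expectation (\<lambda>\<omega>. \<mu> - X 1 \<omega>)"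
    using d1 d2 symm by metis
  then have "expectation (X 1) - \<mu> = \<mu> - expectation (X 1)"
    using int1 by (simp add: prob_space)
  then show ?thesis by simp
qed

lemma momX:
  assumes i: "i \<in> {1..n}"
  shows "integrable M (\<lambda>\<omega>. \<bar>X i \<omega> - \<mu>\<bar> powr (1 + a))"
    and "expectation (\<lambda>\<omega>. \<bar>X i \<omega> - \<mu>\<bar> powr (1 + a)) = Mom"
proof -
  have m: "(\<lambda>y. \<bar>y - \<mu>\<bar> powr (1 + a)) \<in> borel_measurable borel" by measurable
  have "integrable (distr M borel (X 1)) (\<lambda>y. \<bar>y - \<mu>\<bar> powr (1 + a))"
    using intm EX1 by (subst integrable_distr_eq[OF rvX1 m]) simp
  then have "integrable (distr M borel (X i)) (\<lambda>y. \<bar>y - \<mu>\<bar> powr (1 + a))"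
    using ident[OF i] by simp
  then show "integrable M (\<lambda>\<omega>. \<bar>X i \<omega> - \<mu>\<bar> powr (1 + a))"
    by (subst (asm) integrable_distr_eq[OF rvX[OF i] m])
  have "expectation (\<lambda>\<omega>. \<bar>X i \<omega> - \<mu>\<bar> powr (1 + a)) = integral\<^sup>L (distr M borel (X i)) (\<lambda>y. \<bar>y - \<mu>\<bar> powr (1 + a))"
    by (rule integral_distr[OF rvX[OF i] m, symmetric])
  also have "\<dots> = integral\<^sup>L (distr M borel (X 1)) (\<lambda>y. \<bar>y - \<mu>\<bar> powr (1 + a))"
    using ident[OF i] by simp
  also have "\<dots> = expectation (\<lambda>\<omega>. \<bar>X 1 \<omega> - \<mu>\<bar> powr (1 + a))"
    by (rule integral_distr[OF rvX1 m])
  also have "\<dots> = Mom" using mom_eq EX1 by simp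
  finally show "expectation (\<lambda>\<omega>. \<bar>X i \<omega> - \<mu>\<bar> powr (1 + a)) = Mom" .
qed

lemma truncX:
  assumes i: "i \<in> {1..n}"
  shows "expectation (\<lambda>\<omega>. if \<bar>X i \<omega> - \<mu>\<bar> \<le> L then X i \<omega> - \<mu> else 0) = 0"
proof -
  define h :: "real \<Rightarrow> real" where "h y = (if \<bar>y\<bar> \<le> L then y else 0)" for y
  have hm[measurable]: "h \<in> borel_measurable borel" unfolding h_def by measurable
  have hodd: "h (- y) = - h y" for y unfolding h_def by auto
  have m2: "(\<lambda>y. h (y - \<mu>)) \<in> borel_measurable borel" by measurable
  have "expectation (\<lambda>\<omega>. h (X i \<omega> - \<mu>)) = integral\<^sup>L (distr M borel (X i)) (\<lambda>y. h (y - \<mu>))"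
    by (rule integral_distr[OF rvX[OF i] m2, symmetric])
  also have "\<dots> = integral\<^sup>L (distr M borel (X 1)) (\<lambda>y. h (y - \<mu>))"
    using ident[OF i] by simp
  also have "\<dots> = expectation (\<lambda>\<omega>. h (X 1 \<omega> - \<mu>))"
    by (rule integral_distr[OF rvX1 m2])
  finally have e1: "expectation (\<lambda>\<omega>. h (X i \<omega> - \<mu>)) = expectation (\<lambda>\<omega>. h (X 1 \<omega> - \<mu>))" .
  have "expectation (\<lambda>\<omega>. h (X 1 \<omega> - \<mu>)) = integral\<^sup>L (distr M borel (\<lambda>\<omega>. X 1 \<omega> - \<mu>)) h"
    by (rule integral_distr[symmetric]) measurable
  also have "\<dots> = integral\<^sup>L (distr M borel (\<lambda>\<omega>. \<mu> - X 1 \<omega>)) h" by (simp only: symm)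
  also have "\<dots> = expectation (\<lambda>\<omega>. h (\<mu> - X 1 \<omega>))"
    by (rule integral_distr) measurable
  also have "\<dots> = expectation (\<lambda>\<omega>. - h (X 1 \<omega> - \<mu>))"
    using hodd[of "X 1 _ - \<mu>"] by simp
  also have "\<dots> = - expectation (\<lambda>\<omega>. h (X 1 \<omega> - \<mu>))" by simp
  finally have "expectation (\<lambda>\<omega>. h (X 1 \<omega> - \<mu>)) = 0" by simp
  with e1 show ?thesis unfolding h_def by simp
qed

lemma EA:
  assumes i: "i \<in> {1..n}" and j: "j \<in> {1..m-1}"
  shows "expectation (\<alpha> i j) = 0"
proof -
  have meas: "{\<omega>\<in>space M. \<alpha> i j \<omega> = 1} \<in> sets M" using rvA[OF i j] by measurable
  have "expectation (\<alpha> i j) = expectation (\<lambda>\<omega>. 2 * indicator {\<omega>\<in>space M. \<alpha> i j \<omega> = 1} \<omega> - 1 :: real)"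
    by (rule Bochner_Integration.integral_cong[OF refl]) (use rad_val[OF i j] in \<open>fastforce simp: indicator_def\<close>)
  also have "\<dots> = expectation (\<lambda>\<omega>. 2 * indicator {\<omega>\<in>space M. \<alpha> i j \<omega> = 1} \<omega> :: real) - expectation (\<lambda>\<omega>. 1)"
  proof (rule Bochner_Integration.integral_diff)
    show "integrable M (\<lambda>\<omega>. 2 * indicator {\<omega>\<in>space M. \<alpha> i j \<omega> = 1} \<omega> :: real)"
      using meas by (intro integrable_mult_right integrable_real_indicator) (auto simp: emeasure_eq_measure)
  qed simp
  also have "\<dots> = 2 * prob {\<omega>\<in>space M. \<alpha> i j \<omega> = 1} - 1"
    using meas by (simp add: prob_space)
  also have "\<dots> = 0" using rad_prob[OF i j] by simp
  finally show ?thesis .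
qed

lemma truncW:
  assumes i: "i \<in> {1..n}" and j: "j \<in> {1..m-1}"
  shows "expectation (\<lambda>\<omega>. if \<bar>\<alpha> i j \<omega> * (X i \<omega> - \<mu>)\<bar> \<le> L then \<alpha> i j \<omega> * (X i \<omega> - \<mu>) else 0) = 0"
proof -
  define h :: "real \<Rightarrow> real" where "h y = (if \<bar>y - \<mu>\<bar> \<le> L then y - \<mu> else 0)" for y
  have hm[measurable]: "h \<in> borel_measurable borel" unfolding h_def by measurable
  have hb: "\<bar>h y\<bar> \<le> \<bar>L\<bar>" for y unfolding h_def by auto
  define G where "G t = (case t of Inl i \<Rightarrow> (\<lambda>\<omega>. h (X i \<omega>)) | Inr (i, j) \<Rightarrow> \<alpha> i j)" for t
  have sub: "{Inl i, Inr (i, j)} \<subseteq> II" using i j by auto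
  have indG: "indep_vars (\<lambda>_. borel) G {Inl i, Inr (i, j)}"
  proof -
    have "indep_vars (\<lambda>_. borel) (\<lambda>t \<omega>. (case t of Inl _ \<Rightarrow> h | Inr _ \<Rightarrow> (\<lambda>y. y)) (FF t \<omega>)) {Inl i, Inr (i, j)}"
      by (rule indep_vars_compose2[OF indep_vars_subset[OF indep sub]]) (auto split: sum.split)
    then show ?thesis
      by (rule indep_vars_cong[THEN iffD1, rotated 3]) (auto simp: G_def fun_eq_iff)
  qed
  have intG: "integrable M (G t)" if "t \<in> {Inl i, Inr (i, j)}" for t
  proof -
    have "AE \<omega> in M. norm (G t \<omega>) \<le> max \<bar>L\<bar> 1"
    proof (rule AE_I2)
      fix \<omega> assume w: "\<omega> \<in> space M"
      from that show "norm (G t \<omega>) \<le> max \<bar>L\<bar> 1"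
      proof
        assume "t = Inl i" then show ?thesis using hb[of "X i \<omega>"] by (simp add: G_def)
      next
        assume "t \<in> {Inr (i, j)}" then show ?thesis using rad_val[OF i j w] by (auto simp: G_def)
      qed
    qed
    moreover have "G t \<in> borel_measurable M" using that i j by (auto simp: G_def)
    ultimately show ?thesis by (rule integrable_const_bound)
  qed
  have "expectation (\<lambda>\<omega>. \<Prod>t\<in>{Inl i, Inr (i, j)}. G t \<omega>) = (\<Prod>t\<in>{Inl i, Inr (i, j)}. expectation (G t))"
    by (rule indep_vars_lebesgue_integral) (use indG intG in auto)
  also have "\<dots> = 0" using EA[OF i j] by (simp add: G_def)
  finally have "expectation (\<lambda>\<omega>. h (X i \<omega>) * \<alpha> i j \<omega>) = 0" by (simp add: G_def)
  moreover have "expectation (\<lambda>\<omega>. if \<bar>\<alpha> i j \<omega> * (X i \<omega> - \<mu>)\<bar> \<le> L then \<alpha> i j \<omega> * (X i \<omega> - \<mu>) else 0)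
      = expectation (\<lambda>\<omega>. h (X i \<omega>) * \<alpha> i j \<omega>)"
    by (rule Bochner_Integration.integral_cong[OF refl]) (use rad_val[OF i j] in \<open>fastforce simp: h_def abs_mult\<close>)
  ultimately show ?thesis by simp
qed

end

lemma meas_sum_comp:
  fixes g :: "nat \<Rightarrow> 't" and c :: "nat \<Rightarrow> real \<Rightarrow> real"
  assumes "\<And>i. i \<in> B \<Longrightarrow> g i \<in> K" "\<And>i. c i \<in> borel_measurable borel"
  shows "(\<lambda>f. \<Sum>i\<in>B. c i (f (g i))) \<in> borel_measurable (PiM K (\<lambda>_. borel))"
proof (rule borel_measurable_sum)
  fix i assume "i \<in> B"
  then have "(\<lambda>f. f (g i)) \<in> measurable (PiM K (\<lambda>_. borel)) borel"
    using assms(1) by (intro measurable_component_singleton) auto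
  then show "(\<lambda>f. c i (f (g i))) \<in> borel_measurable (PiM K (\<lambda>_. borel))"
    using measurable_compose[OF _ assms(2)] by blast
qed

lemma meas_sum_comp2:
  fixes g g' :: "nat \<Rightarrow> 't" and c :: real
  assumes "\<And>i. i \<in> B \<Longrightarrow> g i \<in> K" "\<And>i. i \<in> B \<Longrightarrow> g' i \<in> K"
  shows "(\<lambda>f. \<Sum>i\<in>B. f (g' i) * (f (g i) - c)) \<in> borel_measurable (PiM K (\<lambda>_. borel))"
proof (rule borel_measurable_sum)
  fix i assume i: "i \<in> B"
  have "(\<lambda>f. f (g i)) \<in> measurable (PiM K (\<lambda>_. borel)) borel"
    using assms(1) i by (intro measurable_component_singleton) auto
  moreover have "(\<lambda>f. f (g' i)) \<in> measurable (PiM K (\<lambda>_. borel)) borel"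
    using assms(2) i by (intro measurable_component_singleton) auto
  ultimately show "(\<lambda>f. f (g' i) * (f (g i) - c)) \<in> borel_measurable (PiM K (\<lambda>_. borel))"
    by measurable
qed

context setting
begin

lemma disj_blocks:
  assumes "1 \<le> k" "inj G"
  shows "disjoint_family_on (\<lambda>l. G ` block n k l) {1..k}"
  unfolding disjoint_family_on_def
proof (intro ballI impI)
  fix l l' assume "l \<in> {1..k}" "l' \<in> {1..k}" "l \<noteq> l'"
  then have "block n k l \<inter> block n k l' = {}" by (rule block_disj[OF assms(1)])
  then show "G ` block n k l \<inter> G ` block n k l' = {}"
    using image_Int[OF assms(2), symmetric] by simp
qed

lemma indep_Xc: "B \<subseteq> {1..n} \<Longrightarrow> indep_vars (\<lambda>_. borel) (\<lambda>i \<omega>. X i \<omega> - \<mu>) B"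
proof (rule indep_groups[OF indep, where K="\<lambda>i. {Inl i}" and h="\<lambda>i f. f (Inl i) - \<mu>"])
  show "disjoint_family_on (\<lambda>i. {Inl i}) B" by (auto simp: disjoint_family_on_def)
  fix i assume "B \<subseteq> {1..n}" "i \<in> B"
  then show "{Inl i} \<subseteq> II" by auto
  show "(\<lambda>f. f (Inl i) - \<mu>) \<in> borel_measurable (Pi\<^sub>M {Inl i} (\<lambda>_. borel))"
    using measurable_component_singleton[of "Inl i" "{Inl i}" "\<lambda>_. borel"] by measurable
  fix \<omega> show "X i \<omega> - \<mu> = restrict (\<lambda>t. FF t \<omega>) {Inl i} (Inl i) - \<mu>" by simp
qed

lemma indep_W: "B \<subseteq> {1..n} \<Longrightarrow> j \<in> {1..m-1} \<Longrightarrow>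
   indep_vars (\<lambda>_. borel) (\<lambda>i \<omega>. \<alpha> i j \<omega> * (X i \<omega> - \<mu>)) B"
proof (rule indep_groups[OF indep, where K="\<lambda>i. {Inl i, Inr (i, j)}" and h="\<lambda>i f. f (Inr (i, j)) * (f (Inl i) - \<mu>)"])
  show "disjoint_family_on (\<lambda>i. {Inl i, Inr (i, j)}) B" by (auto simp: disjoint_family_on_def)
  fix i assume "B \<subseteq> {1..n}" "j \<in> {1..m-1}" "i \<in> B"
  then show "{Inl i, Inr (i, j)} \<subseteq> II" by auto
  show "(\<lambda>f. f (Inr (i, j)) * (f (Inl i) - \<mu>)) \<in> borel_measurable (Pi\<^sub>M {Inl i, Inr (i, j)} (\<lambda>_. borel))"
    using measurable_component_singleton[of "Inl i" "{Inl i, Inr (i, j)}" "\<lambda>_. borel"]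
          measurable_component_singleton[of "Inr (i, j)" "{Inl i, Inr (i, j)}" "\<lambda>_. borel"] by measurable
  fix \<omega> show "\<alpha> i j \<omega> * (X i \<omega> - \<mu>) = restrict (\<lambda>t. FF t \<omega>) {Inl i, Inr (i, j)} (Inr (i, j)) * (restrict (\<lambda>t. FF t \<omega>) {Inl i, Inr (i, j)} (Inl i) - \<mu>)"
    by simp
qed

lemma indep_A: "B \<subseteq> {1..n} \<Longrightarrow> j \<in> {1..m-1} \<Longrightarrow> indep_vars (\<lambda>_. borel) (\<lambda>i. \<alpha> i j) B"
proof (rule indep_groups[OF indep, where K="\<lambda>i. {Inr (i, j)}" and h="\<lambda>i f. f (Inr (i, j))"])
  show "disjoint_family_on (\<lambda>i. {Inr (i, j)}) B" by (auto simp: disjoint_family_on_def)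
  fix i assume "B \<subseteq> {1..n}" "j \<in> {1..m-1}" "i \<in> B"
  then show "{Inr (i, j)} \<subseteq> II" by auto
  show "(\<lambda>f. f (Inr (i, j))) \<in> borel_measurable (Pi\<^sub>M {Inr (i, j)} (\<lambda>_. borel))"
    by (rule measurable_component_singleton) simp
  fix \<omega> show "\<alpha> i j \<omega> = restrict (\<lambda>t. FF t \<omega>) {Inr (i, j)} (Inr (i, j))" by simp
qed

end

lemma block_pos:
  assumes k: "1 \<le> k" "k \<le> n" and l: "l \<in> {1..k}"
  shows "0 < card (block n k l)" "n div k \<le> card (block n k l)"
proof -
  have "k div k \<le> n div k" using k(2) by (rule div_le_mono)
  then have "1 \<le> n div k" using k(1) by simp
  then show "0 < card (block n k l)" using block_card[OF k(1) l, of n] by linarith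
  show "n div k \<le> card (block n k l)" using block_card[OF k(1) l] .
qed

context setting
begin

lemma P_E0:
  assumes k: "1 \<le> k" "k \<le> n" and s: "0 \<le> s"
    and sMo: "\<And>l. l \<in> {1..k} \<Longrightarrow> 12 * Mom \<le> real (card (block n k l)) powr a * s powr (1 + a)"
  shows "prob {\<omega>\<in>space M. real k \<le> 2 * (\<Sum>l\<in>{1..k}. if real (card (block n k l)) * s < (\<Sum>i\<in>block n k l. X i \<omega> - \<mu>) then 1 else 0)}
         \<le> exp (- real k / 8)"
proof (rule count_hoeffding)
  show "finite {1..k}" "card {1..k} = k" "1 \<le> k" using k by auto
  show "indep_vars (\<lambda>_. borel) (\<lambda>l \<omega>. if real (card (block n k l)) * s < (\<Sum>i\<in>block n k l. X i \<omega> - \<mu>) then 1 else (0::real)) {1..k}"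
  proof (rule indep_groups[OF indep, where K="\<lambda>l. (Inl :: nat \<Rightarrow> nat + nat \<times> nat) ` block n k l"
        and h="\<lambda>l f. if real (card (block n k l)) * s < (\<Sum>i\<in>block n k l. f (Inl i) - \<mu>) then 1 else (0::real)"])
    show "disjoint_family_on (\<lambda>l. Inl ` block n k l) {1..k}" by (rule disj_blocks[OF k(1)]) simp
    fix l assume l: "l \<in> {1..k}"
    show "Inl ` block n k l \<subseteq> II" using block_sub by auto
    have [measurable]: "(\<lambda>f. \<Sum>i\<in>block n k l. f (Inl i) - \<mu>) \<in> borel_measurable (PiM (Inl ` block n k l) (\<lambda>_. borel))"
      by (rule meas_sum_comp[where c="\<lambda>i y. y - \<mu>", simplified]) auto
    show "(\<lambda>f. if real (card (block n k l)) * s < (\<Sum>i\<in>block n k l. f (Inl i) - \<mu>) then 1 else 0 :: real)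
          \<in> borel_measurable (PiM (Inl ` block n k l) (\<lambda>_. borel))" by measurable
    fix \<omega>
    have "(\<Sum>i\<in>block n k l. X i \<omega> - \<mu>) = (\<Sum>i\<in>block n k l. restrict (\<lambda>t. FF t \<omega>) (Inl ` block n k l) (Inl i) - \<mu>)"
      by (intro sum.cong) auto
    then show "(if real (card (block n k l)) * s < (\<Sum>i\<in>block n k l. X i \<omega> - \<mu>) then 1 else 0) =
      (if real (card (block n k l)) * s < (\<Sum>i\<in>block n k l. restrict (\<lambda>t. FF t \<omega>) (Inl ` block n k l) (Inl i) - \<mu>) then 1 else 0 :: real)"
      by simp
  qed
  fix l assume l: "l \<in> {1..k}"
  show "prob {\<omega>\<in>space M. (if real (card (block n k l)) * s < (\<Sum>i\<in>block n k l. X i \<omega> - \<mu>) then 1 else 0) = (1::real)} \<le> 1 / 4"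
  proof -
    have sub: "block n k l \<subseteq> {1..n}" by (rule block_sub)
    have "prob {\<omega>\<in>space M. (if real (card (block n k l)) * s < (\<Sum>i\<in>block n k l. X i \<omega> - \<mu>) then 1 else 0) = (1::real)}
       \<le> prob {\<omega>\<in>space M. real (card (block n k l)) * s < \<bar>\<Sum>i\<in>block n k l. X i \<omega> - \<mu>\<bar>}"
    proof (rule finite_measure_mono)
      have [measurable]: "X i \<in> borel_measurable M" if "i \<in> block n k l" for i using that sub rvX by auto
      show "{\<omega>\<in>space M. real (card (block n k l)) * s < \<bar>\<Sum>i\<in>block n k l. X i \<omega> - \<mu>\<bar>} \<in> sets M" by measurable
    qed (auto split: if_splits)
    also have "\<dots> \<le> 1 / 6"
    proof (rule block_tail[OF block_finite refl block_pos(1)[OF k l] indep_Xc[OF sub] a])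
      fix i assume i: "i \<in> block n k l"
      then have i': "i \<in> {1..n}" using sub by auto
      show "integrable M (\<lambda>\<omega>. \<bar>X i \<omega> - \<mu>\<bar> powr (1 + a))" by (rule momX(1)[OF i'])
      show "expectation (\<lambda>\<omega>. \<bar>X i \<omega> - \<mu>\<bar> powr (1 + a)) \<le> Mom" using momX(2)[OF i'] by simp
      show "expectation (\<lambda>\<omega>. if \<bar>X i \<omega> - \<mu>\<bar> \<le> real (card (block n k l)) * s then X i \<omega> - \<mu> else 0) = 0"
        by (rule truncX[OF i'])
    qed (use s sMo[OF l] in auto)
    finally show ?thesis by simp
  qed
qed auto

end

context setting
begin

lemma P_E2:
  assumes k: "1 \<le> k" "k \<le> n" and s: "0 \<le> s" and j: "j \<in> {1..m-1}"
    and sMo: "\<And>l. l \<in> {1..k} \<Longrightarrow> 12 * Mom \<le> real (card (block n k l)) powr a * s powr (1 + a)"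
  shows "prob {\<omega>\<in>space M. real k \<le> 2 * (\<Sum>l\<in>{1..k}. if (\<Sum>i\<in>block n k l. \<alpha> i j \<omega> * (X i \<omega> - \<mu>)) < - (real (card (block n k l)) * s) then 1 else 0)}
         \<le> exp (- real k / 8)"
proof (rule count_hoeffding)
  show "finite {1..k}" "card {1..k} = k" "1 \<le> k" using k by auto
  show "indep_vars (\<lambda>_. borel) (\<lambda>l \<omega>. if (\<Sum>i\<in>block n k l. \<alpha> i j \<omega> * (X i \<omega> - \<mu>)) < - (real (card (block n k l)) * s) then 1 else (0::real)) {1..k}"
  proof (rule indep_groups[OF indep, where K="\<lambda>l. (Inl :: nat \<Rightarrow> nat + nat \<times> nat) ` block n k l \<union> (\<lambda>i. Inr (i, j)) ` block n k l"
        and h="\<lambda>l f. if (\<Sum>i\<in>block n k l. f (Inr (i, j)) * (f (Inl i) - \<mu>)) < - (real (card (block n k l)) * s) then 1 else (0::real)"])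
    show "disjoint_family_on (\<lambda>l. (Inl :: nat \<Rightarrow> nat + nat \<times> nat) ` block n k l \<union> (\<lambda>i. Inr (i, j)) ` block n k l) {1..k}"
      unfolding disjoint_family_on_def
    proof (intro ballI impI)
      fix l l' assume "l \<in> {1..k}" "l' \<in> {1..k}" "l \<noteq> l'"
      then have d: "block n k l \<inter> block n k l' = {}" by (rule block_disj[OF k(1)])
      show "((Inl :: nat \<Rightarrow> nat + nat \<times> nat) ` block n k l \<union> (\<lambda>i. Inr (i, j)) ` block n k l) \<inter>
            (Inl ` block n k l' \<union> (\<lambda>i. Inr (i, j)) ` block n k l') = {}"
        using d by auto
    qed
    fix l assume l: "l \<in> {1..k}"
    show "(Inl :: nat \<Rightarrow> nat + nat \<times> nat) ` block n k l \<union> (\<lambda>i. Inr (i, j)) ` block n k l \<subseteq> II"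
      using block_sub j by auto
    have [measurable]: "(\<lambda>f. \<Sum>i\<in>block n k l. f (Inr (i, j)) * (f (Inl i) - \<mu>)) \<in>
        borel_measurable (PiM ((Inl :: nat \<Rightarrow> nat + nat \<times> nat) ` block n k l \<union> (\<lambda>i. Inr (i, j)) ` block n k l) (\<lambda>_. borel))"
      by (rule meas_sum_comp2) auto
    show "(\<lambda>f. if (\<Sum>i\<in>block n k l. f (Inr (i, j)) * (f (Inl i) - \<mu>)) < - (real (card (block n k l)) * s) then 1 else (0::real))
          \<in> borel_measurable (PiM ((Inl :: nat \<Rightarrow> nat + nat \<times> nat) ` block n k l \<union> (\<lambda>i. Inr (i, j)) ` block n k l) (\<lambda>_. borel))"
      by measurable
    fix \<omega>
    have "(\<Sum>i\<in>block n k l. \<alpha> i j \<omega> * (X i \<omega> - \<mu>)) =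
      (\<Sum>i\<in>block n k l. restrict (\<lambda>t. FF t \<omega>) ((Inl :: nat \<Rightarrow> nat + nat \<times> nat) ` block n k l \<union> (\<lambda>i. Inr (i, j)) ` block n k l) (Inr (i, j)) *
          (restrict (\<lambda>t. FF t \<omega>) ((Inl :: nat \<Rightarrow> nat + nat \<times> nat) ` block n k l \<union> (\<lambda>i. Inr (i, j)) ` block n k l) (Inl i) - \<mu>))"
      by (intro sum.cong) auto
    then show "(if (\<Sum>i\<in>block n k l. \<alpha> i j \<omega> * (X i \<omega> - \<mu>)) < - (real (card (block n k l)) * s) then 1 else (0::real)) =
      (if (\<Sum>i\<in>block n k l. restrict (\<lambda>t. FF t \<omega>) ((Inl :: nat \<Rightarrow> nat + nat \<times> nat) ` block n k l \<union> (\<lambda>i. Inr (i, j)) ` block n k l) (Inr (i, j)) *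
          (restrict (\<lambda>t. FF t \<omega>) ((Inl :: nat \<Rightarrow> nat + nat \<times> nat) ` block n k l \<union> (\<lambda>i. Inr (i, j)) ` block n k l) (Inl i) - \<mu>)) < - (real (card (block n k l)) * s) then 1 else 0)"
      by simp
  qed
  fix l assume l: "l \<in> {1..k}"
  show "prob {\<omega>\<in>space M. (if (\<Sum>i\<in>block n k l. \<alpha> i j \<omega> * (X i \<omega> - \<mu>)) < - (real (card (block n k l)) * s) then 1 else 0) = (1::real)} \<le> 1 / 4"
  proof -
    have sub: "block n k l \<subseteq> {1..n}" by (rule block_sub)
    have "prob {\<omega>\<in>space M. (if (\<Sum>i\<in>block n k l. \<alpha> i j \<omega> * (X i \<omega> - \<mu>)) < - (real (card (block n k l)) * s) then 1 else 0) = (1::real)}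
       \<le> prob {\<omega>\<in>space M. real (card (block n k l)) * s < \<bar>\<Sum>i\<in>block n k l. \<alpha> i j \<omega> * (X i \<omega> - \<mu>)\<bar>}"
    proof (rule finite_measure_mono)
      have [measurable]: "X i \<in> borel_measurable M" if "i \<in> block n k l" for i using that sub rvX by auto
      have [measurable]: "\<alpha> i j \<in> borel_measurable M" if "i \<in> block n k l" for i using that sub rvA j by auto
      show "{\<omega>\<in>space M. real (card (block n k l)) * s < \<bar>\<Sum>i\<in>block n k l. \<alpha> i j \<omega> * (X i \<omega> - \<mu>)\<bar>} \<in> sets M" by measurable
    qed (auto split: if_splits)
    also have "\<dots> \<le> 1 / 6"
    proof (rule block_tail[OF block_finite refl block_pos(1)[OF k l] indep_W[OF sub j] a])
      fix i assume i: "i \<in> block n k l"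
      then have i': "i \<in> {1..n}" using sub by auto
      have eq: "\<bar>\<alpha> i j \<omega> * (X i \<omega> - \<mu>)\<bar> powr (1 + a) = \<bar>X i \<omega> - \<mu>\<bar> powr (1 + a)" if "\<omega> \<in> space M" for \<omega>
        using rad_val[OF i' j that] by (auto simp: abs_mult)
      show "integrable M (\<lambda>\<omega>. \<bar>\<alpha> i j \<omega> * (X i \<omega> - \<mu>)\<bar> powr (1 + a))"
      proof -
        have "integrable M (\<lambda>\<omega>. \<bar>\<alpha> i j \<omega> * (X i \<omega> - \<mu>)\<bar> powr (1 + a)) = integrable M (\<lambda>\<omega>. \<bar>X i \<omega> - \<mu>\<bar> powr (1 + a))"
          by (intro Bochner_Integration.integrable_cong refl eq)
        then show ?thesis using momX(1)[OF i'] by simp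
      qed
      have "expectation (\<lambda>\<omega>. \<bar>\<alpha> i j \<omega> * (X i \<omega> - \<mu>)\<bar> powr (1 + a)) = expectation (\<lambda>\<omega>. \<bar>X i \<omega> - \<mu>\<bar> powr (1 + a))"
        by (rule Bochner_Integration.integral_cong[OF refl eq])
      then show "expectation (\<lambda>\<omega>. \<bar>\<alpha> i j \<omega> * (X i \<omega> - \<mu>)\<bar> powr (1 + a)) \<le> Mom" using momX(2)[OF i'] by simp
      show "expectation (\<lambda>\<omega>. if \<bar>\<alpha> i j \<omega> * (X i \<omega> - \<mu>)\<bar> \<le> real (card (block n k l)) * s then \<alpha> i j \<omega> * (X i \<omega> - \<mu>) else 0) = 0"
        by (rule truncW[OF i' j])
    qed (use s sMo[OF l] in auto)
    finally show ?thesis by simp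
  qed
qed auto

lemma P_E1:
  assumes k: "1 \<le> k" "k \<le> n" and j: "j \<in> {1..m-1}"
  shows "prob {\<omega>\<in>space M. \<exists>l\<in>{1..k}. real (card (block n k l)) < 2 * (\<Sum>i\<in>block n k l. \<alpha> i j \<omega>)}
         \<le> real k * exp (- real (n div k) / 8)"
proof -
  have one: "prob {\<omega>\<in>space M. real (card (block n k l)) < 2 * (\<Sum>i\<in>block n k l. \<alpha> i j \<omega>)} \<le> exp (- real (n div k) / 8)"
    if l: "l \<in> {1..k}" for l
  proof -
    define B where "B = block n k l"
    define N where "N = real (card B)"
    have sub: "B \<subseteq> {1..n}" unfolding B_def by (rule block_sub)
    have finB: "finite B" unfolding B_def by (rule block_finite)
    have Npos: "0 < N" using block_pos(1)[OF k l] unfolding N_def B_def by simp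
    have Nq: "real (n div k) \<le> N" using block_pos(2)[OF k l] unfolding N_def B_def by simp
    interpret H: Hoeffding_ineq M B "\<lambda>i. \<alpha> i j" "\<lambda>_. -1" "\<lambda>_. 1" "\<Sum>i\<in>B. expectation (\<alpha> i j)"
    proof unfold_locales
      show "finite B" by (rule finB)
      show "indep_vars (\<lambda>_. borel) (\<lambda>i. \<alpha> i j) B" by (rule indep_A[OF sub j])
      fix i assume "i \<in> B"
      then have i: "i \<in> {1..n}" using sub by auto
      show "AE x in M. \<alpha> i j x \<in> {-1..1}" using rad_val[OF i j] by (intro AE_I2) fastforce
    qed simp
    have mu0: "(\<Sum>i\<in>B. expectation (\<alpha> i j)) = 0" using EA j sub by (intro sum.neutral) auto
    have sq: "(\<Sum>i\<in>B. (1 - (-1::real))\<^sup>2) = 4 * N" unfolding N_def by simp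
    have "prob {\<omega>\<in>space M. real (card (block n k l)) < 2 * (\<Sum>i\<in>block n k l. \<alpha> i j \<omega>)}
       \<le> prob {\<omega>\<in>space M. (\<Sum>i\<in>B. \<alpha> i j \<omega>) \<ge> (\<Sum>i\<in>B. expectation (\<alpha> i j)) + N / 2}"
    proof (rule finite_measure_mono)
      have [measurable]: "\<alpha> i j \<in> borel_measurable M" if "i \<in> B" for i using that sub rvA j by auto
      show "{\<omega>\<in>space M. (\<Sum>i\<in>B. \<alpha> i j \<omega>) \<ge> (\<Sum>i\<in>B. expectation (\<alpha> i j)) + N / 2} \<in> sets M" by measurable
    qed (auto simp: mu0[unfolded B_def] N_def B_def)
    also have "\<dots> \<le> exp (-2 * (N / 2)\<^sup>2 / (\<Sum>i\<in>B. (1 - (-1::real))\<^sup>2))"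
      by (rule H.Hoeffding_ineq_ge) (use Npos sq in auto)
    also have "-2 * (N / 2)\<^sup>2 / (\<Sum>i\<in>B. (1 - (-1::real))\<^sup>2) = - N / 8"
      unfolding sq using Npos by (simp add: power2_eq_square field_simps)
    also have "exp (- N / 8) \<le> exp (- real (n div k) / 8)" using Nq by simp
    finally show ?thesis .
  qed
  have "{\<omega>\<in>space M. \<exists>l\<in>{1..k}. real (card (block n k l)) < 2 * (\<Sum>i\<in>block n k l. \<alpha> i j \<omega>)} =
        (\<Union>l\<in>{1..k}. {\<omega>\<in>space M. real (card (block n k l)) < 2 * (\<Sum>i\<in>block n k l. \<alpha> i j \<omega>)})" by auto
  also have "prob \<dots> \<le> (\<Sum>l\<in>{1..k}. prob {\<omega>\<in>space M. real (card (block n k l)) < 2 * (\<Sum>i\<in>block n k l. \<alpha> i j \<omega>)})"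
  proof (rule measure_UNION_le)
    fix l assume l: "l \<in> {1..k}"
    have [measurable]: "\<alpha> i j \<in> borel_measurable M" if "i \<in> block n k l" for i using that block_sub rvA j by blast
    show "{\<omega>\<in>space M. real (card (block n k l)) < 2 * (\<Sum>i\<in>block n k l. \<alpha> i j \<omega>)} \<in> sets M" by measurable
  qed simp
  also have "\<dots> \<le> (\<Sum>l\<in>{1..k}. exp (- real (n div k) / 8))" by (rule sum_mono) (rule one)
  also have "\<dots> = real k * exp (- real (n div k) / 8)" by simp
  finally show ?thesis .
qed

end

lemma nat_ineq: "1 \<le> r \<Longrightarrow> r < (m::nat) \<Longrightarrow> m - 1 \<le> r * (m - r)"
proof -
  assume r1: "1 \<le> r" and rm: "r < m"
  obtain r' where r: "r = Suc r'" using r1 by (cases r) auto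
  obtain d' where d: "m = Suc (r + d')" using less_imp_Suc_add[OF rm] by blast
  have "m - r = Suc d'" using d by simp
  moreover have "d' \<le> r * d'" using r by simp
  ultimately show ?thesis using d by simp
qed

lemma ereal_gap:
  assumes "U - ereal \<mu> > ereal t"
  shows "ereal (\<mu> + t) < U"
proof (cases U)
  case (real u)
  then show ?thesis using assms by simp
next
  case PInf
  then show ?thesis by simp
next
  case MInf
  then show ?thesis using assms by simp
qed


theorem theorem3:
  fixes M :: "'w measure"
    and X :: "nat \<Rightarrow> 'w \<Rightarrow> real"
    and \<alpha> :: "nat \<Rightarrow> nat \<Rightarrow> 'w \<Rightarrow> real"
    and \<pi> :: "'w \<Rightarrow> nat \<Rightarrow> nat"
    and n k m r :: nat and \<mu> a Mom :: real
  defines "I \<equiv> {1..n} <+> ({1..n} \<times> {1..m-1})"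
  defines "F \<equiv> (\<lambda>t. case t of Inl i \<Rightarrow> X i | Inr (i, j) \<Rightarrow> \<alpha> i j)"
  assumes P: "prob_space M"
    and k: "1 \<le> k" "k \<le> n"
    and rm: "1 \<le> r" "r \<le> m"
    and a: "0 < a" "a \<le> 1"
    and indep: "prob_space.indep_vars M (\<lambda>_. borel) F I"
    and pi_meas: "\<pi> \<in> measurable M (count_space UNIV)"
    and indep_pi: "distr M (PiM I (\<lambda>_. borel) \<Otimes>\<^sub>M count_space UNIV)
                       (\<lambda>\<omega>. (\<lambda>t\<in>I. F t \<omega>, \<pi> \<omega>))
                   = distr M (PiM I (\<lambda>_. borel)) (\<lambda>\<omega>. \<lambda>t\<in>I. F t \<omega>)
                       \<Otimes>\<^sub>M distr M (count_space UNIV) \<pi>"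
    and ident: "\<And>i. i \<in> {1..n} \<Longrightarrow> distr M borel (X i) = distr M borel (X 1)"
    and symm: "distr M borel (\<lambda>\<omega>. X 1 \<omega> - \<mu>) = distr M borel (\<lambda>\<omega>. \<mu> - X 1 \<omega>)"
    and int1: "integrable M (X 1)"
    and intm: "integrable M (\<lambda>\<omega>. \<bar>X 1 \<omega> - integral\<^sup>L M (X 1)\<bar> powr (1 + a))"
    and mom_eq: "integral\<^sup>L M (\<lambda>\<omega>. \<bar>X 1 \<omega> - integral\<^sup>L M (X 1)\<bar> powr (1 + a)) = Mom"
    and rad_val: "\<And>i j \<omega>. i \<in> {1..n} \<Longrightarrow> j \<in> {1..m-1} \<Longrightarrow> \<omega> \<in> space M \<Longrightarrow>
                    \<alpha> i j \<omega> \<in> {-1, 1}"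
    and rad_prob: "\<And>i j. i \<in> {1..n} \<Longrightarrow> j \<in> {1..m-1} \<Longrightarrow>
                    measure M {\<omega> \<in> space M. \<alpha> i j \<omega> = 1} = 1 / 2"
    and pi_perm: "\<And>\<omega>. \<omega> \<in> space M \<Longrightarrow> \<pi> \<omega> permutes {0..<m}"
    and pi_unif: "\<And>p. p permutes {0..<m} \<Longrightarrow>
                    measure M {\<omega> \<in> space M. \<pi> \<omega> = p} = 1 / fact m"
  shows "\<exists>A \<in> sets M.
           {\<omega> \<in> space M.
              Uupper n k m r (\<lambda>i. X i \<omega>) (\<lambda>i j. \<alpha> i j \<omega>) (\<pi> \<omega>) - ereal \<mu>
                > ereal (4 * ((12 * Mom) powr (1 / a) / real (n div k)) powr (a / (1 + a)))}
             \<subseteq> A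
         \<and> measure M A \<le> real (m - r) *
              (2 * real k * exp (- real (n div k) / 8) + 2 * exp (- real k / 8))"
proof -
  interpret prob_space M by (rule P)
  have indep': "indep_vars (\<lambda>_. borel) (\<lambda>t. case t of Inl i \<Rightarrow> X i | Inr (i, j) \<Rightarrow> \<alpha> i j) ({1..n} <+> ({1..n} \<times> {1..m-1}))"
    using indep unfolding I_def F_def .
  have ax: "setting_axioms M X \<alpha> n m \<mu> a Mom"
    by (rule setting_axioms.intro[OF a(1) a(2) indep' ident symm int1 intm mom_eq rad_val rad_prob])
  interpret S: setting M X \<alpha> n m \<mu> a Mom by (rule setting.intro[OF P ax])
  define t where "t = 4 * ((12 * Mom) powr (1 / a) / real (n div k)) powr (a / (1 + a))"
  define s where "s = ((12 * Mom) powr (1 / a) / real (n div k)) powr (a / (1 + a))"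
  have ts: "t = 4 * s" unfolding t_def s_def ..
  define Bad0 where "Bad0 = {\<omega>\<in>space M. real k \<le> 2 * (\<Sum>l\<in>{1..k}. if real (card (block n k l)) * s < (\<Sum>i\<in>block n k l. X i \<omega> - \<mu>) then 1 else (0::real))}"
  define E1 where "E1 j = {\<omega>\<in>space M. \<exists>l\<in>{1..k}. real (card (block n k l)) < 2 * (\<Sum>i\<in>block n k l. \<alpha> i j \<omega>)}" for j
  define E2 where "E2 j = {\<omega>\<in>space M. real k \<le> 2 * (\<Sum>l\<in>{1..k}. if (\<Sum>i\<in>block n k l. \<alpha> i j \<omega> * (X i \<omega> - \<mu>)) < - (real (card (block n k l)) * s) then 1 else (0::real))}" for j
  define Bad where "Bad j = E1 j \<union> E2 j" for j
  define Cnt where "Cnt \<omega> = (\<Sum>j\<in>{1..m-1}. indicator (Bad j) \<omega> :: real)" for \<omega>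
  define A where "A = Bad0 \<union> {\<omega>\<in>space M. real r \<le> Cnt \<omega>}"
  have [measurable]: "X i \<in> borel_measurable M" if "i \<in> block n k l" for i l
    using that block_sub S.rvX by blast
  have [measurable]: "\<alpha> i j \<in> borel_measurable M" if "i \<in> block n k l" "j \<in> {1..m-1}" for i j l
    using that block_sub S.rvA by blast
  have mB0[measurable]: "Bad0 \<in> sets M" unfolding Bad0_def by measurable
  have mE1[measurable]: "E1 j \<in> sets M" if "j \<in> {1..m-1}" for j unfolding E1_def using that by measurable
  have mE2[measurable]: "E2 j \<in> sets M" if "j \<in> {1..m-1}" for j unfolding E2_def using that by measurable
  have mBad[measurable]: "Bad j \<in> sets M" if "j \<in> {1..m-1}" for j unfolding Bad_def using that by measurable
  have mCnt[measurable]: "Cnt \<in> borel_measurable M" unfolding Cnt_def by measurable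
  have mA: "A \<in> sets M" unfolding A_def by measurable

  show ?thesis
  proof (cases "r = m")
    case True
    have none: "\<not> (Uupper n k m r (\<lambda>i. X i \<omega>) (\<lambda>i j. \<alpha> i j \<omega>) (\<pi> \<omega>) - ereal \<mu> > ereal t)" for \<omega>
    proof -
      have "Theta_set n k m r (\<lambda>i. X i \<omega>) (\<lambda>i j. \<alpha> i j \<omega>) (\<pi> \<omega>) = {}"
        using True unfolding Theta_set_def rank_def by auto
      then have "Uupper n k m r (\<lambda>i. X i \<omega>) (\<lambda>i j. \<alpha> i j \<omega>) (\<pi> \<omega>) = -\<infinity>"
        unfolding Uupper_def by (simp add: bot_ereal_def)
      then show ?thesis by simp
    qed
    show ?thesis using none True unfolding t_def by (intro bexI[of _ "{}"]) auto
  next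
    case False
    then have rlt: "r < m" using rm by simp
    have Mom0: "0 \<le> Mom" using mom_eq[symmetric] by simp
    have "k div k \<le> n div k" using k(2) by (rule div_le_mono)
    then have q1: "1 \<le> n div k" using k(1) by simp
    have s0: "0 \<le> s" unfolding s_def by simp
    define c where "c = (12 * Mom) powr (1 / a)"
    have c0: "0 \<le> c" unfolding c_def by simp
    have spow: "s powr (1 + a) = 12 * Mom / real (n div k) powr a"
    proof -
      have "s powr (1 + a) = (c / real (n div k)) powr (a / (1 + a) * (1 + a))"
        unfolding s_def c_def by (simp add: powr_powr)
      also have "a / (1 + a) * (1 + a) = a" using a by (simp add: field_simps)
      also have "(c / real (n div k)) powr a = c powr a / real (n div k) powr a"
        using c0 by (simp add: powr_divide)
      also have "c powr a = (12 * Mom) powr (1 / a * a)" unfolding c_def by (simp add: powr_powr)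
      also have "1 / a * a = 1" using a by simp
      also have "(12 * Mom) powr 1 = 12 * Mom" using Mom0 by simp
      finally show ?thesis .
    qed
    have sMo: "12 * Mom \<le> real (card (block n k l)) powr a * s powr (1 + a)" if l: "l \<in> {1..k}" for l
    proof -
      have qa: "0 < real (n div k) powr a" using q1 by simp
      have "real (n div k) powr a \<le> real (card (block n k l)) powr a"
        using block_pos(2)[OF k l] a by (intro powr_mono2) auto
      then have "real (n div k) powr a * (12 * Mom / real (n div k) powr a) \<le> real (card (block n k l)) powr a * (12 * Mom / real (n div k) powr a)"
        using Mom0 qa by (intro mult_right_mono) auto
      then show ?thesis unfolding spow using qa by simp
    qed
    define e0 where "e0 = exp (- real k / 8)"
    define e1 where "e1 = exp (- real (n div k) / 8)"
    have PB0: "prob Bad0 \<le> e0" unfolding Bad0_def e0_def by (rule S.P_E0[OF k s0 sMo])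
    have PBad: "prob (Bad j) \<le> real k * e1 + e0" if j: "j \<in> {1..m-1}" for j
    proof -
      have "prob (Bad j) \<le> prob (E1 j) + prob (E2 j)" unfolding Bad_def
        by (rule measure_Un_le) (use j in auto)
      also have "prob (E1 j) \<le> real k * e1" unfolding E1_def e1_def by (rule S.P_E1[OF k j])
      also have "prob (E2 j) \<le> e0" unfolding E2_def e0_def by (rule S.P_E2[OF k s0 j sMo])
      finally show ?thesis by simp
    qed
    have intCnt: "integrable M Cnt" unfolding Cnt_def
      by (intro Bochner_Integration.integrable_sum integrable_real_indicator) (auto simp: emeasure_eq_measure)
    have ECnt: "expectation Cnt = (\<Sum>j\<in>{1..m-1}. prob (Bad j))"
      unfolding Cnt_def
      by (subst Bochner_Integration.integral_sum) (auto intro!: integrable_real_indicator simp: emeasure_eq_measure)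
    have rpos: "0 < real r" using rm by simp
    have Cnt0: "0 \<le> Cnt \<omega>" for \<omega> unfolding Cnt_def by (simp add: sum_nonneg)
    have PC: "prob {\<omega>\<in>space M. real r \<le> Cnt \<omega>} \<le> real (m - r) * (real k * e1 + e0)"
    proof -
      have "prob {\<omega>\<in>space M. real r \<le> Cnt \<omega>} \<le> expectation Cnt / real r"
        by (rule integral_Markov_inequality_measure[where A="space M"]) (use intCnt rpos Cnt0 in auto)
      also have "\<dots> \<le> (\<Sum>j\<in>{1..m-1}. real k * e1 + e0) / real r"
        unfolding ECnt using rpos by (intro divide_right_mono sum_mono PBad) auto
      also have "\<dots> = real (m - 1) * (real k * e1 + e0) / real r" by simp
      also have "\<dots> \<le> real (r * (m - r)) * (real k * e1 + e0) / real r"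
      proof -
        have "real (m - 1) \<le> real (r * (m - r))" using nat_ineq[OF rm(1) rlt] by (simp only: of_nat_le_iff)
        moreover have "0 \<le> real k * e1 + e0" unfolding e0_def e1_def by simp
        ultimately show ?thesis using rpos by (intro divide_right_mono mult_right_mono) auto
      qed
      also have "\<dots> = real (m - r) * (real k * e1 + e0)" using rpos by simp
      finally show ?thesis .
    qed
    have PA: "prob A \<le> real (m - r) * (2 * real k * e1 + 2 * e0)"
    proof -
      have "prob A \<le> prob Bad0 + prob {\<omega>\<in>space M. real r \<le> Cnt \<omega>}" unfolding A_def
        by (rule measure_Un_le) auto
      also have "\<dots> \<le> e0 + real (m - r) * (real k * e1 + e0)" using PB0 PC by simp
      also have "\<dots> \<le> real (m - r) * (2 * real k * e1 + 2 * e0)"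
      proof -
        have mr: "1 \<le> real (m - r)" using rlt by simp
        have "e0 \<le> real (m - r) * e0" using mr unfolding e0_def by simp
        moreover have "0 \<le> real (m - r) * (real k * e1)" unfolding e1_def by simp
        ultimately show ?thesis by (simp add: algebra_simps)
      qed
      finally show ?thesis .
    qed
    have incl: "{\<omega> \<in> space M. Uupper n k m r (\<lambda>i. X i \<omega>) (\<lambda>i j. \<alpha> i j \<omega>) (\<pi> \<omega>) - ereal \<mu> > ereal t} \<subseteq> A"
    proof safe
      fix \<omega> assume w: "\<omega> \<in> space M" and gt: "Uupper n k m r (\<lambda>i. X i \<omega>) (\<lambda>i j. \<alpha> i j \<omega>) (\<pi> \<omega>) - ereal \<mu> > ereal t"
      show "\<omega> \<in> A"
      proof (cases "\<omega> \<in> Bad0")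
        case True then show ?thesis unfolding A_def by simp
      next
        case nb0: False
        define x where "x = (\<lambda>i. X i \<omega>)"
        define al where "al = (\<lambda>i j. \<alpha> i j \<omega>)"
        have "ereal (\<mu> + t) < Sup (ereal ` Theta_set n k m r x al (\<pi> \<omega>))"
          using ereal_gap[OF gt] unfolding Uupper_def x_def al_def .
        then obtain \<theta> where th: "\<theta> \<in> Theta_set n k m r x al (\<pi> \<omega>)" "\<mu> + t < \<theta>"
          by (auto simp: less_Sup_iff)
        have rk: "1 + card {j \<in> {1..m-1}. prec_pi (\<pi> \<omega>) (\<lambda>j. Sstat n k x al j \<theta>) 0 j} \<le> m - r"
          using th(1) unfolding Theta_set_def rank_def by simp
        have good: "{j\<in>{1..m-1}. \<omega> \<notin> Bad j} \<subseteq> {j \<in> {1..m-1}. prec_pi (\<pi> \<omega>) (\<lambda>j. Sstat n k x al j \<theta>) 0 j}"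
        proof safe
          fix j assume j: "j \<in> {1..m-1}" and nb: "\<omega> \<notin> Bad j"
          have "Sstat n k x al 0 \<theta> < Sstat n k x al j \<theta>"
          proof (rule key_det[OF k s0])
            show "1 \<le> j" using j by simp
            show "\<not> real k \<le> 2 * (\<Sum>l\<in>{1..k}. if real (card (block n k l)) * s < (\<Sum>i\<in>block n k l. x i - \<mu>) then 1 else 0)"
              using nb0 w unfolding Bad0_def x_def by simp
            show "\<forall>l\<in>{1..k}. \<not> real (card (block n k l)) < 2 * (\<Sum>i\<in>block n k l. al i j)"
              using nb w unfolding Bad_def E1_def al_def by simp
            show "\<not> real k \<le> 2 * (\<Sum>l\<in>{1..k}. if (\<Sum>i\<in>block n k l. al i j * (x i - \<mu>)) < - (real (card (block n k l)) * s) then 1 else 0)"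
              using nb w unfolding Bad_def E2_def al_def x_def by simp
            show "\<mu> + 4 * s < \<theta>" using th(2) ts by simp
          qed
          then show "prec_pi (\<pi> \<omega>) (\<lambda>j. Sstat n k x al j \<theta>) 0 j" unfolding prec_pi_def by simp
        qed
        have "card {j\<in>{1..m-1}. \<omega> \<notin> Bad j} \<le> card {j \<in> {1..m-1}. prec_pi (\<pi> \<omega>) (\<lambda>j. Sstat n k x al j \<theta>) 0 j}"
          by (rule card_mono[OF _ good]) simp
        then have cg: "card {j\<in>{1..m-1}. \<omega> \<notin> Bad j} \<le> m - r - 1" using rk by simp
        have "{j\<in>{1..m-1}. \<omega> \<notin> Bad j} = {1..m-1} - {j\<in>{1..m-1}. \<omega> \<in> Bad j}" by auto
        moreover have "card ({1..m-1} - {j\<in>{1..m-1}. \<omega> \<in> Bad j}) = card {1..m-1} - card {j\<in>{1..m-1}. \<omega> \<in> Bad j}"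
          by (rule card_Diff_subset) auto
        ultimately have cgood: "card {j\<in>{1..m-1}. \<omega> \<notin> Bad j} = (m - 1) - card {j\<in>{1..m-1}. \<omega> \<in> Bad j}"
          by simp
        have cbad: "card {j\<in>{1..m-1}. \<omega> \<in> Bad j} \<le> m - 1"
        proof -
          have "card {j\<in>{1..m-1}. \<omega> \<in> Bad j} \<le> card {1..m-1}" by (rule card_mono) auto
          then show ?thesis by simp
        qed
        have "r \<le> card {j\<in>{1..m-1}. \<omega> \<in> Bad j}" using cg cgood cbad rlt by arith
        moreover have "Cnt \<omega> = real (card {j\<in>{1..m-1}. \<omega> \<in> Bad j})"
        proof -
          have "Cnt \<omega> = (\<Sum>j\<in>{1..m-1}. if \<omega> \<in> Bad j then 1 else 0)"
            unfolding Cnt_def by (intro sum.cong) (auto simp: indicator_def)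
          also have "\<dots> = real (card {j\<in>{1..m-1}. \<omega> \<in> Bad j})" by (rule card_as_sum) simp
          finally show ?thesis .
        qed
        ultimately show ?thesis unfolding A_def using w by simp
      qed
    qed
    show ?thesis
      by (rule bexI[of _ A]) (use incl PA mA in \<open>auto simp: t_def e0_def e1_def\<close>)
  qed
qed

end
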